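(* Let $\mathcal H$ be a complex Hilbert space, $T\in\mathcal B(\mathcal H)$, $T\neq0$, with polar decomposition $T=U|T|$. Let $\{x_n\}\subset\mathcal H$ with $\|x_n\|=1$ and $w(T)=\lim_{n\to\infty}|\langle Tx_n,x_n\rangle|$. Then for all $t\in[0,1]$, $$w(T)\le\frac{\|T\|^{1-t}}{2}\left(\big\||T|^t+|T^*|^t\big\|-\lim_{n\to\infty}\frac{\||T^*|^{t/2}x_n\|}{2\||T|^{t/2}x_n\|}\inf_{\lambda\in\mathbb C}\big\|(|T|^{t/2}-\lambda|T|^{t/2}U^* )x_n\big\|^2\right)\le\frac{\|T\|^{1-t}}{2}\big\||T|^t+|T^*|^t\big\|$$ (the limit being assumed to exist).
   Context: $\mathcal B(\mathcal H)$ is the algebra of bounded operators; $|T|=(T^*T)^{1/2}$, $|T^*|=(TT^* )^{1/2}$, powers via functional calculus with $|T|^0=I$; $T=U|T|$ is the polar decomposition with $U$ a partial isometry. $\|\cdot\|$ is the operator norm and $w(T)=\sup\{|\langle Tx,x\rangle|:\|x\|=1\}$ the numerical radius. *)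

theory Defs
  imports "HOL-Analysis.Analysis" "HOL-Computational_Algebra.Polynomial"
begin

class complex_normed_vector = real_normed_vector +
  fixes scaleC :: "complex \<Rightarrow> 'a \<Rightarrow> 'a" (infixr "*\<^sub>C" 75)
  assumes scaleC_add_right: "a *\<^sub>C (x + y) = a *\<^sub>C x + a *\<^sub>C y"
    and scaleC_add_left: "(a + b) *\<^sub>C x = a *\<^sub>C x + b *\<^sub>C x"
    and scaleC_scaleC: "a *\<^sub>C (b *\<^sub>C x) = (a * b) *\<^sub>C x"
    and scaleC_one: "1 *\<^sub>C x = x"
    and scaleC_of_real: "complex_of_real r *\<^sub>C x = scaleR r x"
    and norm_scaleC: "norm (a *\<^sub>C x) = cmod a * norm x"

class complex_inner = complex_normed_vector +
  fixes cinner :: "'a \<Rightarrow> 'a \<Rightarrow> complex"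
  assumes cinner_commute: "cinner x y = cnj (cinner y x)"
    and cinner_add_right: "cinner x (y + z) = cinner x y + cinner x z"
    and cinner_scaleC_right: "cinner x (a *\<^sub>C y) = a * cinner x y"
    and cinner_self_norm: "cinner x x = complex_of_real ((norm x)\<^sup>2)"

class chilbert_space = complex_inner + complete_space

instantiation complex :: chilbert_space
begin
definition scaleC_complex_def: "scaleC a (x::complex) = a * x"
definition cinner_complex_def: "cinner (x::complex) y = cnj x * y"
instance
proof
  fix a b :: complex and x y z :: complex and r :: real
  show "a *\<^sub>C (x + y) = a *\<^sub>C x + a *\<^sub>C y" by (simp add: scaleC_complex_def algebra_simps)
  show "(a + b) *\<^sub>C x = a *\<^sub>C x + b *\<^sub>C x" by (simp add: scaleC_complex_def algebra_simps)
  show "a *\<^sub>C (b *\<^sub>C x) = (a * b) *\<^sub>C x" by (simp add: scaleC_complex_def)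
  show "1 *\<^sub>C x = x" by (simp add: scaleC_complex_def)
  show "complex_of_real r *\<^sub>C x = scaleR r x" by (simp add: scaleC_complex_def scaleR_conv_of_real)
  show "norm (a *\<^sub>C x) = cmod a * norm x" by (simp add: scaleC_complex_def norm_mult)
  show "cinner x y = cnj (cinner y x)" by (simp add: cinner_complex_def)
  show "cinner x (y + z) = cinner x y + cinner x z" by (simp add: cinner_complex_def algebra_simps)
  show "cinner x (a *\<^sub>C y) = a * cinner x y" by (simp add: cinner_complex_def scaleC_complex_def)
  show "cinner x x = complex_of_real ((norm x)\<^sup>2)"
    unfolding cinner_complex_def complex_norm_square by (simp add: mult.commute)
qed
end

definition bop :: "('a::complex_normed_vector \<Rightarrow> 'a) \<Rightarrow> bool" where
  "bop T \<longleftrightarrow> bounded_linear T \<and> (\<forall>c x. T (c *\<^sub>C x) = c *\<^sub>C T x)"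

definition adj :: "('a::complex_inner \<Rightarrow> 'a) \<Rightarrow> 'a \<Rightarrow> 'a" where
  "adj T = (THE S. \<forall>x y. cinner (T x) y = cinner x (S y))"

definition numrad :: "('a::complex_inner \<Rightarrow> 'a) \<Rightarrow> real" where
  "numrad T = (SUP x \<in> {x. norm x = 1}. cmod (cinner (T x) x))"

definition poly_op :: "('a::complex_normed_vector \<Rightarrow> 'a) \<Rightarrow> real poly \<Rightarrow> 'a \<Rightarrow> 'a" where
  "poly_op A p x = (\<Sum>i\<le>degree p. complex_of_real (coeff p i) *\<^sub>C (A ^^ i) x)"

text \<open>For a positive operator \<open>A\<close> (spectrum in \<open>[0, \<parallel>A\<parallel>]\<close>) and \<open>f\<close> continuous on
  \<open>[0, \<parallel>A\<parallel>]\<close>, \<open>f(A)\<close> is the operator-norm limit of \<open>p\<^sub>n(A)\<close> for every sequence of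
  polynomials \<open>p\<^sub>n\<close> converging uniformly to \<open>f\<close> on \<open>[0, \<parallel>A\<parallel>]\<close>.\<close>
definition cfc :: "('a::complex_normed_vector \<Rightarrow> 'a) \<Rightarrow> (real \<Rightarrow> real) \<Rightarrow> 'a \<Rightarrow> 'a" where
  "cfc A f = (THE B. bop B \<and>
     (\<forall>P :: nat \<Rightarrow> real poly.
        uniform_limit {0..onorm A} (\<lambda>n s. poly (P n) s) f sequentially \<longrightarrow>
        (\<lambda>n. onorm (\<lambda>v. poly_op A (P n) v - B v)) \<longlonglongrightarrow> 0))"

text \<open>Power \<open>s\<^sup>t\<close> on \<open>[0,\<infinity>)\<close> with the convention \<open>s\<^sup>0 = 1\<close> (so \<open>A\<^sup>0 = I\<close>).\<close>
definition rpow :: "real \<Rightarrow> real \<Rightarrow> real" where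
  "rpow t s = (if t = 0 then 1 else s powr t)"

definition opow :: "('a::complex_normed_vector \<Rightarrow> 'a) \<Rightarrow> real \<Rightarrow> 'a \<Rightarrow> 'a" where
  "opow A t = cfc A (rpow t)"

definition absop :: "('a::complex_inner \<Rightarrow> 'a) \<Rightarrow> 'a \<Rightarrow> 'a" where
  "absop T = cfc (adj T \<circ> T) sqrt"

definition partial_isometry :: "('a::complex_inner \<Rightarrow> 'a) \<Rightarrow> bool" where
  "partial_isometry U \<longleftrightarrow> bop U \<and>
     (\<forall>x. (\<forall>y. U y = 0 \<longrightarrow> cinner y x = 0) \<longrightarrow> norm (U x) = norm x)"

definition polar_decomp :: "('a::complex_inner \<Rightarrow> 'a) \<Rightarrow> ('a \<Rightarrow> 'a) \<Rightarrow> bool" where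
  "polar_decomp T U \<longleftrightarrow> partial_isometry U \<and> T = U \<circ> absop T \<and>
     {x. U x = 0} = {x. T x = 0}"

end

theory Submission
  imports Defs "HOL-Computational_Algebra.Fundamental_Theorem_Algebra"
begin


lemma scaleC_zero_left [simp]: "(0::complex) *\<^sub>C x = 0"
  using scaleC_of_real[of 0 x] by simp

lemma scaleC_zero_right [simp]: "a *\<^sub>C (0::'a::complex_normed_vector) = 0"
  using norm_scaleC[of a "0::'a"] by simp

lemma scaleC_minus_right: "a *\<^sub>C (- x) = - (a *\<^sub>C (x::'a::complex_normed_vector))"
proof -
  have "a *\<^sub>C (- x) + a *\<^sub>C x = 0" by (simp flip: scaleC_add_right)
  then show ?thesis by (rule add_eq_0_iff2[THEN iffD1])
qed

lemma scaleC_diff_right: "a *\<^sub>C (x - y) = a *\<^sub>C x - a *\<^sub>C (y::'a::complex_normed_vector)"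
  unfolding diff_conv_add_uminus by (simp only: scaleC_add_right scaleC_minus_right)

lemma scaleC_minus_left: "(- a) *\<^sub>C x = - (a *\<^sub>C (x::'a::complex_normed_vector))"
proof -
  have "(- a) *\<^sub>C x + a *\<^sub>C x = 0" by (simp flip: scaleC_add_left)
  then show ?thesis by (rule add_eq_0_iff2[THEN iffD1])
qed

lemma scaleC_diff_left: "(a - b) *\<^sub>C x = a *\<^sub>C x - b *\<^sub>C (x::'a::complex_normed_vector)"
  unfolding diff_conv_add_uminus by (simp only: scaleC_add_left scaleC_minus_left)

lemma scaleC_one' [simp]: "1 *\<^sub>C x = (x::'a::complex_normed_vector)"
  by (rule scaleC_one)

lemma scaleC_eq_0_iff: "a *\<^sub>C x = 0 \<longleftrightarrow> a = 0 \<or> x = (0::'a::complex_normed_vector)"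
proof -
  have "a *\<^sub>C x = 0 \<longleftrightarrow> norm (a *\<^sub>C x) = 0" by (rule norm_eq_zero[symmetric])
  also have "\<dots> \<longleftrightarrow> cmod a * norm x = 0" by (simp only: norm_scaleC)
  finally show ?thesis by simp
qed

lemma cinner_add_left: "cinner (x + y) z = cinner x z + cinner y (z::'a::complex_inner)"
  by (subst (1 2 3) cinner_commute) (simp add: cinner_add_right)

lemma cinner_scaleC_left: "cinner (a *\<^sub>C x) y = cnj a * cinner x (y::'a::complex_inner)"
  by (subst (1 2) cinner_commute) (simp add: cinner_scaleC_right)

lemma cinner_zero_right [simp]: "cinner x (0::'a::complex_inner) = 0"
  using cinner_add_right[of x 0 0] by simp

lemma cinner_zero_left [simp]: "cinner (0::'a::complex_inner) x = 0"
  using cinner_add_left[of 0 0 x] by simp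

lemma cinner_minus_right: "cinner x (- y) = - cinner x (y::'a::complex_inner)"
proof -
  have "cinner x (- y) + cinner x y = 0" using cinner_add_right[of x "-y" y] by simp
  then show ?thesis by (rule add_eq_0_iff2[THEN iffD1])
qed

lemma cinner_minus_left: "cinner (- x) y = - cinner x (y::'a::complex_inner)"
proof -
  have "cinner (- x) y + cinner x y = 0" using cinner_add_left[of "-x" x y] by simp
  then show ?thesis by (rule add_eq_0_iff2[THEN iffD1])
qed

lemma cinner_diff_right: "cinner x (y - z) = cinner x y - cinner x (z::'a::complex_inner)"
  unfolding diff_conv_add_uminus by (simp only: cinner_add_right cinner_minus_right)

lemma cinner_diff_left: "cinner (x - y) z = cinner x z - cinner y (z::'a::complex_inner)"
  unfolding diff_conv_add_uminus by (simp only: cinner_add_left cinner_minus_left)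

lemma cinner_scaleR_right: "cinner x (r *\<^sub>R y) = of_real r * cinner x (y::'a::complex_inner)"
  by (simp add: cinner_scaleC_right flip: scaleC_of_real)

lemma cinner_scaleR_left: "cinner (r *\<^sub>R x) y = of_real r * cinner x (y::'a::complex_inner)"
  by (simp add: cinner_scaleC_left flip: scaleC_of_real)

lemma cinner_self_Re: "Re (cinner x x) = (norm (x::'a::complex_inner))\<^sup>2"
  by (simp add: cinner_self_norm)

lemma cinner_self_Im: "Im (cinner x x) = 0"
  by (simp add: cinner_self_norm)

lemma cinner_self_cmod: "cmod (cinner x x) = (norm (x::'a::complex_inner))\<^sup>2"
  unfolding cinner_self_norm norm_of_real by simp

lemma cinner_self_eq_0: "cinner x x = 0 \<longleftrightarrow> x = (0::'a::complex_inner)"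
  by (simp add: cinner_self_norm)

lemma cinner_cnj_Re: "Re (cinner y x) = Re (cinner x (y::'a::complex_inner))"
  by (subst cinner_commute) simp

lemma norm_add_sq: "(norm (x + y))\<^sup>2 = (norm x)\<^sup>2 + (norm y)\<^sup>2 + 2 * Re (cinner x (y::'a::complex_inner))"
proof -
  have "(norm (x + y))\<^sup>2 = Re (cinner (x+y) (x+y))" by (simp add: cinner_self_Re)
  also have "\<dots> = Re (cinner x x) + Re (cinner y y) + Re (cinner x y) + Re (cinner y x)"
    by (simp add: cinner_add_left cinner_add_right)
  finally show ?thesis by (simp add: cinner_self_Re cinner_cnj_Re)
qed

lemma norm_diff_sq: "(norm (x - y))\<^sup>2 = (norm x)\<^sup>2 + (norm y)\<^sup>2 - 2 * Re (cinner x (y::'a::complex_inner))"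
  using norm_add_sq[of x "-y"] by (simp add: cinner_minus_right)

lemma cinner_eq_zero_imp: "(\<And>y. cinner x y = 0) \<Longrightarrow> x = (0::'a::complex_inner)"
  using cinner_self_eq_0 by blast

lemma cinner_ext: "(\<And>y. cinner x y = cinner z y) \<Longrightarrow> x = (z::'a::complex_inner)"
  using cinner_eq_zero_imp[of "x - z"] by (simp add: cinner_diff_left)

lemma cinner_ext_right: "(\<And>y. cinner y x = cinner y z) \<Longrightarrow> x = (z::'a::complex_inner)"
  by (metis cinner_commute cinner_ext)

lemma Cauchy_Schwarz_c: "cmod (cinner x y) \<le> norm x * norm (y::'a::complex_inner)"
proof (cases "y = 0")
  case True then show ?thesis by simp
next
  case False
  define c where "c = cinner y x / of_real ((norm y)\<^sup>2)"
  have ny: "norm y > 0" using False by simp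
  have "0 \<le> Re (cinner (x - c *\<^sub>C y) (x - c *\<^sub>C y))" by (simp add: cinner_self_Re)
  also have "cinner (x - c *\<^sub>C y) (x - c *\<^sub>C y)
      = cinner x x - c * cinner x y - cnj c * cinner y x + cnj c * c * cinner y y"
    by (simp add: cinner_diff_left cinner_diff_right cinner_scaleC_left cinner_scaleC_right algebra_simps)
  also have "cnj c * c * cinner y y = cnj c * cinner y x"
    using ny by (simp add: c_def cinner_self_norm field_simps power2_eq_square)
  also have "c * cinner x y = of_real ((cmod (cinner x y))\<^sup>2 / (norm y)\<^sup>2)"
  proof -
    have "c * cinner x y = cnj (cinner x y) * cinner x y / of_real ((norm y)\<^sup>2)"
      by (simp add: c_def cinner_commute[of y x])
    also have "cnj (cinner x y) * cinner x y = of_real ((cmod (cinner x y))\<^sup>2)"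
      by (simp only: complex_norm_square mult.commute)
    finally show ?thesis by simp
  qed
  finally have "0 \<le> (norm x)\<^sup>2 - (cmod (cinner x y))\<^sup>2 / (norm y)\<^sup>2"
    by (simp add: cinner_self_Re)
  then have "(cmod (cinner x y))\<^sup>2 \<le> (norm x)\<^sup>2 * (norm y)\<^sup>2"
    using ny by (simp add: field_simps)
  then have "(cmod (cinner x y))\<^sup>2 \<le> (norm x * norm y)\<^sup>2" by (simp add: power_mult_distrib)
  then show ?thesis by (simp add: power2_le_iff_abs_le)
qed

lemma tendsto_cinner_left:
  fixes f :: "nat \<Rightarrow> 'a::complex_inner"
  assumes "f \<longlonglongrightarrow> l" shows "(\<lambda>n. cinner (f n) y) \<longlonglongrightarrow> cinner l y"
proof -
  have "(\<lambda>n. norm (f n - l) * norm y) \<longlonglongrightarrow> 0 * norm y"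
    using assms by (intro tendsto_mult tendsto_const) (simp add: LIM_zero_iff tendsto_norm_zero)
  have "(\<lambda>n. cinner (f n) y - cinner l y) \<longlonglongrightarrow> 0"
  proof (rule Lim_null_comparison[OF always_eventually])
    show "\<forall>n. norm (cinner (f n) y - cinner l y) \<le> norm (f n - l) * norm y"
    proof
      fix n show "norm (cinner (f n) y - cinner l y) \<le> norm (f n - l) * norm y"
        using Cauchy_Schwarz_c[of "f n - l" y] by (simp only: cinner_diff_left)
    qed
  qed (use \<open>(\<lambda>n. norm (f n - l) * norm y) \<longlonglongrightarrow> 0 * norm y\<close> in simp)
  then show ?thesis by (simp add: LIM_zero_iff)
qed

lemma tendsto_cinner_right:
  fixes f :: "nat \<Rightarrow> 'a::complex_inner"
  assumes "f \<longlonglongrightarrow> l" shows "(\<lambda>n. cinner y (f n)) \<longlonglongrightarrow> cinner y l"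
proof -
  have "(\<lambda>n. cnj (cinner (f n) y)) \<longlonglongrightarrow> cnj (cinner l y)"
    by (intro tendsto_cnj tendsto_cinner_left assms)
  then show ?thesis by (subst (1 2) cinner_commute) simp
qed


lemma bopI:
  assumes "\<And>x y. T (x + y) = T x + T y" "\<And>c x. T (c *\<^sub>C x) = c *\<^sub>C T x"
    "\<And>x. norm (T x) \<le> K * norm x"
  shows "bop T"
  unfolding bop_def
proof (intro conjI allI)
  show "bounded_linear T"
  proof (rule bounded_linear_intro[where K=K])
    fix r x show "T (r *\<^sub>R x) = r *\<^sub>R T x"
      using assms(2)[of "complex_of_real r" x] by (simp add: scaleC_of_real)
  qed (use assms in \<open>auto simp: mult.commute\<close>)
qed (use assms in auto)

lemma bop_bl: "bop T \<Longrightarrow> bounded_linear T" by (simp add: bop_def)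
lemma bop_scaleC: "bop T \<Longrightarrow> T (c *\<^sub>C x) = c *\<^sub>C T x" by (simp add: bop_def)
lemma bop_add: "bop T \<Longrightarrow> T (x + y) = T x + T y"
  using bop_bl linear_add bounded_linear.linear by blast
lemma bop_diff: "bop T \<Longrightarrow> T (x - y) = T x - T y"
  using bop_bl linear_diff bounded_linear.linear by blast
lemma bop_minus: "bop T \<Longrightarrow> T (- x) = - T x"
  using bop_bl linear_neg bounded_linear.linear by blast
lemma bop_zero: "bop T \<Longrightarrow> T 0 = 0"
  using bop_bl linear_0 bounded_linear.linear by blast
lemma bop_scaleR: "bop T \<Longrightarrow> T (r *\<^sub>R x) = r *\<^sub>R T x"
  using bop_bl linear_scale bounded_linear.linear by blast
lemma bop_onorm: "bop T \<Longrightarrow> norm (T x) \<le> onorm T * norm x"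
  using bop_bl onorm by blast
lemma bop_onorm_nonneg: "bop T \<Longrightarrow> 0 \<le> onorm T"
  using bop_bl onorm_pos_le by blast

lemma bop_id: "bop (\<lambda>x. x)"
  by (rule bopI[where K=1]) auto

lemma bop_comp: "bop T \<Longrightarrow> bop S \<Longrightarrow> bop (\<lambda>x. T (S x))"
proof (rule bopI[where K="onorm T * onorm S"])
  fix x assume "bop T" "bop S"
  have "norm (T (S x)) \<le> onorm T * norm (S x)" using \<open>bop T\<close> by (rule bop_onorm)
  also have "\<dots> \<le> onorm T * (onorm S * norm x)"
    using \<open>bop T\<close> \<open>bop S\<close> by (intro mult_left_mono bop_onorm bop_onorm_nonneg)
  finally show "norm (T (S x)) \<le> onorm T * onorm S * norm x" by (simp add: mult.assoc)
qed (auto simp: bop_add bop_scaleC)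

lemma bop_comp': "bop T \<Longrightarrow> bop S \<Longrightarrow> bop (T \<circ> S)"
  using bop_comp[of T S] by (simp add: comp_def)

lemma bop_plus: "bop T \<Longrightarrow> bop S \<Longrightarrow> bop (\<lambda>x. T x + S x)"
proof (rule bopI[where K="onorm T + onorm S"])
  fix x assume "bop T" "bop S"
  have "norm (T x + S x) \<le> norm (T x) + norm (S x)" by (rule norm_triangle_ineq)
  also have "\<dots> \<le> onorm T * norm x + onorm S * norm x"
    using \<open>bop T\<close> \<open>bop S\<close> by (intro add_mono bop_onorm)
  finally show "norm (T x + S x) \<le> (onorm T + onorm S) * norm x" by (simp add: algebra_simps)
qed (auto simp: bop_add bop_scaleC scaleC_add_right)

lemma bop_smult: "bop T \<Longrightarrow> bop (\<lambda>x. c *\<^sub>C T x)"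
proof (rule bopI[where K="cmod c * onorm T"])
  fix x assume "bop T"
  show "norm (c *\<^sub>C T x) \<le> cmod c * onorm T * norm x"
    using bop_onorm[OF \<open>bop T\<close>, of x] by (simp add: norm_scaleC mult.assoc mult_left_mono)
qed (auto simp: bop_add bop_scaleC scaleC_add_right scaleC_scaleC mult.commute)

lemma bop_minus_op: "bop T \<Longrightarrow> bop S \<Longrightarrow> bop (\<lambda>x. T x - S x)"
proof -
  assume "bop T" "bop S"
  then have "bop (\<lambda>x. T x + (-1) *\<^sub>C S x)" by (intro bop_plus bop_smult)
  then show ?thesis by (simp add: scaleC_minus_left)
qed

lemma bop_ext_onorm0:
  assumes "bop T" "onorm T = 0" shows "T x = 0"
  using bop_onorm[OF assms(1), of x] assms(2) by simp

section \<open>Projection onto closed subspaces and Riesz representation\<close>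

lemma parallelogram_c:
  "(norm (a - b))\<^sup>2 + (norm (a + b))\<^sup>2 = 2 * (norm a)\<^sup>2 + 2 * (norm (b::'a::complex_inner))\<^sup>2"
  by (simp add: norm_add_sq norm_diff_sq)

lemma proj_exists:
  fixes K :: "'a::chilbert_space set"
  assumes cl: "closed K" and z: "0 \<in> K"
    and add: "\<And>x y. x \<in> K \<Longrightarrow> y \<in> K \<Longrightarrow> x + y \<in> K"
    and sc: "\<And>c x. x \<in> K \<Longrightarrow> c *\<^sub>C x \<in> K"
  shows "\<exists>k\<in>K. \<forall>y\<in>K. cinner (x0 - k) y = 0"
proof -
  define D where "D = (\<lambda>k. norm (x0 - k)) ` K"
  define d where "d = Inf D"
  have Dne: "D \<noteq> {}" using z by (auto simp: D_def)
  have Dbdd: "bdd_below D" unfolding D_def by (rule bdd_belowI[of _ 0]) auto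
  have dle: "d \<le> norm (x0 - y)" if "y \<in> K" for y
    unfolding d_def using Dbdd that by (intro cInf_lower) (auto simp: D_def)
  have d0: "0 \<le> d" unfolding d_def using Dne by (intro cInf_greatest) (auto simp: D_def)
  have "\<forall>n. \<exists>k\<in>K. (norm (x0 - k))\<^sup>2 < d\<^sup>2 + 1 / Suc n"
  proof
    fix n :: nat
    have "d < sqrt (d\<^sup>2 + 1 / Suc n)"
      using d0 by (metis add_strict_increasing2 le_less less_add_same_cancel1 of_nat_0_less_iff
          real_less_rsqrt zero_less_Suc zero_less_divide_1_iff zero_le_power2 power2_less_imp_less)
    then obtain v where "v \<in> D" "v < sqrt (d\<^sup>2 + 1 / Suc n)"
      using cInf_lessD[OF Dne] unfolding d_def by blast
    then obtain k where k: "k \<in> K" "norm (x0 - k) < sqrt (d\<^sup>2 + 1 / Suc n)"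
      by (auto simp: D_def)
    then have "(norm (x0 - k))\<^sup>2 < d\<^sup>2 + 1 / Suc n"
      by (metis norm_ge_zero real_sqrt_less_iff real_sqrt_abs abs_of_nonneg)
    with k show "\<exists>k\<in>K. (norm (x0 - k))\<^sup>2 < d\<^sup>2 + 1 / Suc n" by blast
  qed
  then obtain ks where ksK: "\<And>n. ks n \<in> K" and ksd: "\<And>n. (norm (x0 - ks n))\<^sup>2 < d\<^sup>2 + 1 / Suc n"
    by metis
  have distb: "(norm (ks m - ks n))\<^sup>2 \<le> 2 / Suc n + 2 / Suc m" for m n
  proof -
    have mid: "(1/2::complex) *\<^sub>C (ks n + ks m) \<in> K" using ksK by (intro sc add)
    have "x0 - (1/2::complex) *\<^sub>C (ks n + ks m) = (1/2::real) *\<^sub>R ((x0 - ks n) + (x0 - ks m))"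
      by (simp add: scaleC_of_real[symmetric] algebra_simps scaleC_add_right scaleC_diff_right
          flip: scaleC_add_left)
    then have "norm ((x0 - ks n) + (x0 - ks m)) = 2 * norm (x0 - (1/2::complex) *\<^sub>C (ks n + ks m))"
      by simp
    also have "\<dots> \<ge> 2 * d" using dle[OF mid] by simp
    finally have h1: "(2 * d)\<^sup>2 \<le> (norm ((x0 - ks n) + (x0 - ks m)))\<^sup>2"
      using d0 by (intro power_mono) auto
    have h2: "(norm ((x0 - ks n) - (x0 - ks m)))\<^sup>2 + (norm ((x0 - ks n) + (x0 - ks m)))\<^sup>2
        = 2 * (norm (x0 - ks n))\<^sup>2 + 2 * (norm (x0 - ks m))\<^sup>2" by (rule parallelogram_c)
    have "(x0 - ks n) - (x0 - ks m) = ks m - ks n" by simp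
    with h1 h2 ksd[of n] ksd[of m] show ?thesis by (simp add: power_mult_distrib)
  qed
  have "Cauchy ks"
  proof (rule metric_CauchyI)
    fix e :: real assume "0 < e"
    obtain N :: nat where N: "4 / e\<^sup>2 < N" using reals_Archimedean2 by blast
    have "0 < e\<^sup>2" using \<open>0 < e\<close> by simp
    show "\<exists>M. \<forall>m\<ge>M. \<forall>n\<ge>M. dist (ks m) (ks n) < e"
    proof (intro exI allI impI)
      fix m n assume "N \<le> m" "N \<le> n"
      have "2 / Suc n \<le> 2 / Suc N" "2 / Suc m \<le> 2 / Suc N"
        using \<open>N \<le> m\<close> \<open>N \<le> n\<close> by (auto intro!: divide_left_mono)
      moreover have "4 / Suc N < e\<^sup>2"
      proof -
        have a: "4 < real N * e\<^sup>2" using N \<open>0 < e\<^sup>2\<close> by (simp add: pos_divide_less_eq)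
        have b: "real N * e\<^sup>2 < real (Suc N) * e\<^sup>2" using \<open>0 < e\<^sup>2\<close> by simp
        have "4 < real (Suc N) * e\<^sup>2" using a b by linarith
        then show ?thesis by (simp add: divide_less_eq mult.commute)
      qed
      ultimately have "(dist (ks m) (ks n))\<^sup>2 < e\<^sup>2"
        using distb[of m n] by (simp add: dist_norm)
      then show "dist (ks m) (ks n) < e"
        using \<open>0 < e\<close> by (simp add: power_less_imp_less_base)
    qed
  qed
  then obtain k where lim: "ks \<longlonglongrightarrow> k"
    using Cauchy_convergent_iff convergent_def by blast
  have kK: "k \<in> K" using closed_sequentially[OF cl ksK lim] .
  have "(\<lambda>n. (norm (x0 - ks n))\<^sup>2) \<longlonglongrightarrow> (norm (x0 - k))\<^sup>2"
    by (intro tendsto_intros lim)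
  moreover have "(\<lambda>n. d\<^sup>2 + 1 / Suc n) \<longlonglongrightarrow> d\<^sup>2 + 0"
    by (intro tendsto_intros LIMSEQ_inverse_real_of_nat[unfolded inverse_eq_divide])
  ultimately have kmin: "(norm (x0 - k))\<^sup>2 \<le> d\<^sup>2"
    using ksd by (intro LIMSEQ_le[where X="\<lambda>n. (norm (x0 - ks n))\<^sup>2"]) (auto intro: less_imp_le)
  have "cinner (x0 - k) y = 0" if yK: "y \<in> K" for y
  proof -
    define w where "w = cinner (x0 - k) y"
    define t where "t = 1 / ((norm y)\<^sup>2 + 1)"
    have yy: "0 < (norm y)\<^sup>2 + 1" by (simp add: add_nonneg_pos)
    have t0: "0 < t" using yy by (simp add: t_def)
    have tle: "t * (norm y)\<^sup>2 < 1" using yy by (simp add: t_def field_simps)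
    define c where "c = complex_of_real t * cnj w"
    have "k + c *\<^sub>C y \<in> K" using kK yK by (intro add sc)
    then have "d \<le> norm (x0 - (k + c *\<^sub>C y))" by (rule dle)
    then have "d\<^sup>2 \<le> (norm ((x0 - k) - c *\<^sub>C y))\<^sup>2" using d0 by (simp add: power_mono algebra_simps)
    also have "\<dots> = (norm (x0 - k))\<^sup>2 + (cmod c * norm y)\<^sup>2 - 2 * Re (c * w)"
      by (simp add: norm_diff_sq norm_scaleC cinner_scaleC_right w_def)
    also have "c * w = of_real (t * (cmod w)\<^sup>2)"
    proof -
      have "cnj w * w = of_real ((cmod w)\<^sup>2)" by (simp only: complex_norm_square mult.commute)
      then show ?thesis by (simp add: c_def mult.assoc)
    qed
    also have "cmod c = t * cmod w" using t0 by (simp add: c_def norm_mult)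
    finally have "2 * (t * (cmod w)\<^sup>2) \<le> (t * cmod w * norm y)\<^sup>2" using kmin by simp
    then have "t * (2 * (cmod w)\<^sup>2) \<le> t * ((cmod w)\<^sup>2 * (t * (norm y)\<^sup>2))"
      by (simp add: power_mult_distrib algebra_simps power2_eq_square)
    then have "2 * (cmod w)\<^sup>2 \<le> (cmod w)\<^sup>2 * (t * (norm y)\<^sup>2)" using t0 by simp
    also have "\<dots> \<le> (cmod w)\<^sup>2 * 1" using tle by (intro mult_left_mono) auto
    finally have "(cmod w)\<^sup>2 \<le> 0" by simp
    then show ?thesis by (simp add: w_def)
  qed
  with kK show ?thesis by blast
qed

lemma riesz:
  fixes \<phi> :: "'a::chilbert_space \<Rightarrow> complex"
  assumes bl: "bounded_linear \<phi>" and hom: "\<And>c x. \<phi> (c *\<^sub>C x) = c * \<phi> x"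
  shows "\<exists>z. \<forall>x. \<phi> x = cinner z x"
proof (cases "\<forall>x. \<phi> x = 0")
  case True then show ?thesis by (intro exI[of _ 0]) simp
next
  case False
  then obtain x0 where x0: "\<phi> x0 \<noteq> 0" by blast
  interpret bounded_linear \<phi> by fact
  define K where "K = {x. \<phi> x = 0}"
  have "closed K" unfolding K_def by (intro closed_Collect_eq continuous_intros continuous_on) 
  moreover have "0 \<in> K" by (simp add: K_def zero)
  moreover have "\<And>x y. x \<in> K \<Longrightarrow> y \<in> K \<Longrightarrow> x + y \<in> K" by (simp add: K_def add)
  moreover have "\<And>c x. x \<in> K \<Longrightarrow> c *\<^sub>C x \<in> K" by (simp add: K_def hom)
  ultimately obtain k where kK: "k \<in> K" and ort: "\<And>y. y \<in> K \<Longrightarrow> cinner (x0 - k) y = 0"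
    using proj_exists[of K x0] by blast
  define y where "y = x0 - k"
  have py: "\<phi> y = \<phi> x0" using kK by (simp add: y_def K_def diff)
  have yne: "y \<noteq> 0" using py x0 by (auto simp: zero)
  have ny: "cinner y y \<noteq> 0" using yne by (simp add: cinner_self_eq_0)
  show ?thesis
  proof (intro exI allI)
    fix x
    have "\<phi> x *\<^sub>C y - \<phi> y *\<^sub>C x \<in> K"
      by (simp add: K_def diff hom)
    then have "cinner y (\<phi> x *\<^sub>C y - \<phi> y *\<^sub>C x) = 0" using ort by (simp add: y_def)
    then have "\<phi> x * cinner y y = \<phi> y * cinner y x"
      by (simp add: cinner_diff_right cinner_scaleC_right)
    then have "\<phi> x = \<phi> y * cinner y x / cinner y y" using ny by (simp add: field_simps)
    also have "\<dots> = cinner ((cnj (\<phi> y / cinner y y)) *\<^sub>C y) x"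
      by (simp add: cinner_scaleC_left)
    finally show "\<phi> x = cinner ((cnj (\<phi> y / cinner y y)) *\<^sub>C y) x" .
  qed
qed

lemma adj_exists:
  fixes T :: "'a::chilbert_space \<Rightarrow> 'a"
  assumes "bop T" shows "\<exists>S. \<forall>x y. cinner (T x) y = cinner x (S y)"
proof -
  have "\<exists>z. \<forall>x. cinner y (T x) = cinner z x" for y
  proof (rule riesz)
    show "bounded_linear (\<lambda>x. cinner y (T x))"
    proof (rule bounded_linear_intro[where K="norm y * onorm T"])
      fix a b show "cinner y (T (a + b)) = cinner y (T a) + cinner y (T b)"
        using assms by (simp add: bop_add cinner_add_right)
      fix r show "cinner y (T (r *\<^sub>R a)) = r *\<^sub>R cinner y (T a)"
        using assms by (simp add: bop_scaleR cinner_scaleR_right scaleR_conv_of_real)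
      have "norm (cinner y (T a)) \<le> norm y * norm (T a)" by (rule Cauchy_Schwarz_c)
      also have "\<dots> \<le> norm y * (onorm T * norm a)"
        using assms by (intro mult_left_mono bop_onorm) auto
      finally show "norm (cinner y (T a)) \<le> norm a * (norm y * onorm T)" by (simp add: ac_simps)
    qed
  qed (use assms in \<open>simp add: bop_scaleC cinner_scaleC_right\<close>)
  then obtain S where S: "\<And>y x. cinner y (T x) = cinner (S y) x" by metis
  show ?thesis
  proof (intro exI allI)
    fix x y show "cinner (T x) y = cinner x (S y)"
      using S[of y x] by (metis cinner_commute)
  qed
qed

lemma adj_prop:
  fixes T :: "'a::chilbert_space \<Rightarrow> 'a"
  assumes "bop T" shows "cinner (T x) y = cinner x (adj T y)"
proof -
  obtain S where S: "\<forall>x y. cinner (T x) y = cinner x (S y)" using adj_exists[OF assms] by blast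
  have "\<forall>x y. cinner (T x) y = cinner x (adj T y)"
    unfolding adj_def
  proof (rule theI[where a=S])
    show "\<forall>x y. cinner (T x) y = cinner x (S y)" by (rule S)
    fix S' assume "\<forall>x y. cinner (T x) y = cinner x (S' y)"
    with S have "\<And>y. S' y = S y" by (metis cinner_ext_right)
    then show "S' = S" by blast
  qed
  then show ?thesis by blast
qed

lemma adj_prop2:
  fixes T :: "'a::chilbert_space \<Rightarrow> 'a"
  assumes "bop T" shows "cinner (adj T x) y = cinner x (T y)"
  using adj_prop[OF assms, of y x] by (metis cinner_commute)

lemma adj_unique:
  fixes T :: "'a::chilbert_space \<Rightarrow> 'a"
  assumes "bop T" "\<And>x y. cinner (T x) y = cinner x (S y)" shows "adj T = S"
proof
  fix y show "adj T y = S y"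
    using assms adj_prop[OF assms(1)] by (metis cinner_ext_right)
qed

lemma adj_bop:
  fixes T :: "'a::chilbert_space \<Rightarrow> 'a"
  assumes T: "bop T" shows "bop (adj T)"
proof (rule bopI[where K="onorm T"])
  fix x y show "adj T (x + y) = adj T x + adj T y"
    by (rule cinner_ext_right) (simp add: adj_prop[OF T, symmetric] cinner_add_right)
  fix c show "adj T (c *\<^sub>C x) = c *\<^sub>C adj T x"
    by (rule cinner_ext_right) (simp add: adj_prop[OF T, symmetric] cinner_scaleC_right)
  show "norm (adj T x) \<le> onorm T * norm x"
  proof (cases "adj T x = 0")
    case True then show ?thesis using bop_onorm_nonneg[OF T] by simp
  next
    case False
    have "(norm (adj T x))\<^sup>2 = Re (cinner (adj T x) (adj T x))" by (simp add: cinner_self_Re)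
    also have "\<dots> = Re (cinner (T (adj T x)) x)" by (simp add: adj_prop[OF T])
    also have "\<dots> \<le> cmod (cinner (T (adj T x)) x)" by (rule complex_Re_le_cmod)
    also have "\<dots> \<le> norm (T (adj T x)) * norm x" by (rule Cauchy_Schwarz_c)
    also have "\<dots> \<le> onorm T * norm (adj T x) * norm x"
      using T by (intro mult_right_mono bop_onorm) auto
    finally have "norm (adj T x) * norm (adj T x) \<le> norm (adj T x) * (onorm T * norm x)"
      by (simp add: power2_eq_square ac_simps)
    then show ?thesis using False by simp
  qed
qed

lemma adj_adj:
  fixes T :: "'a::chilbert_space \<Rightarrow> 'a"
  assumes T: "bop T" shows "adj (adj T) = T"
  by (rule adj_unique[OF adj_bop[OF T]]) (simp add: adj_prop2[OF T])

lemma adj_comp: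
  fixes T S :: "'a::chilbert_space \<Rightarrow> 'a"
  assumes T: "bop T" and S: "bop S" shows "adj (\<lambda>x. T (S x)) = (\<lambda>x. adj S (adj T x))"
  by (rule adj_unique[OF bop_comp[OF T S]]) (simp add: adj_prop[OF T] adj_prop[OF S])


lemma bop_sum: "bop A \<Longrightarrow> A (\<Sum>i\<in>S. f i) = (\<Sum>i\<in>S. A (f i))"
proof (induction S rule: infinite_finite_induct)
  case (infinite S) then show ?case by (simp add: bop_zero)
next
  case empty then show ?case by (simp add: bop_zero)
next
  case (insert x F) then show ?case by (simp add: bop_add)
qed

lemma bop_0: "bop (\<lambda>x. 0)"
  by (rule bopI[where K=0]) auto

lemma poly_op_sum:
  assumes "degree p < n"
  shows "poly_op A p x = (\<Sum>i<n. complex_of_real (coeff p i) *\<^sub>C (A ^^ i) x)"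
  unfolding poly_op_def
proof (rule sum.mono_neutral_left)
  show "{..degree p} \<subseteq> {..<n}" using assms by auto
  show "\<forall>i\<in>{..<n} - {..degree p}. complex_of_real (coeff p i) *\<^sub>C (A ^^ i) x = 0"
    by (auto simp: coeff_eq_0)
qed auto

lemma poly_op_0 [simp]: "poly_op A 0 x = 0"
  by (simp add: poly_op_def)

lemma poly_op_pCons:
  assumes A: "bop A"
  shows "poly_op A (pCons a p) x = complex_of_real a *\<^sub>C x + A (poly_op A p x)"
proof -
  define n where "n = Suc (degree p)"
  have d1: "degree (pCons a p) < Suc n" using degree_pCons_le[of a p] by (simp add: n_def)
  have d2: "degree p < n" by (simp add: n_def)
  have "poly_op A (pCons a p) x = (\<Sum>i<Suc n. complex_of_real (coeff (pCons a p) i) *\<^sub>C (A ^^ i) x)"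
    by (rule poly_op_sum[OF d1])
  also have "\<dots> = complex_of_real a *\<^sub>C x + (\<Sum>i<n. complex_of_real (coeff p i) *\<^sub>C A ((A ^^ i) x))"
    by (simp add: sum.lessThan_Suc_shift del: sum.lessThan_Suc)
  also have "(\<Sum>i<n. complex_of_real (coeff p i) *\<^sub>C A ((A ^^ i) x))
      = A (\<Sum>i<n. complex_of_real (coeff p i) *\<^sub>C (A ^^ i) x)"
    by (simp add: bop_sum[OF A] bop_scaleC[OF A])
  also have "(\<Sum>i<n. complex_of_real (coeff p i) *\<^sub>C (A ^^ i) x) = poly_op A p x"
    by (rule poly_op_sum[OF d2, symmetric])
  finally show ?thesis .
qed

lemma poly_op_const: "poly_op A [:c:] x = complex_of_real c *\<^sub>C x"
  by (simp add: poly_op_def)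

lemma poly_op_X: "bop A \<Longrightarrow> poly_op A [:0, 1:] x = A x"
  by (simp add: poly_op_pCons poly_op_const)

lemma poly_op_bop: "bop A \<Longrightarrow> bop (poly_op A p)"
proof (induction p)
  case 0 then show ?case using bop_smult[OF bop_id, of 0] by (simp add: fun_eq_iff)
next
  case (pCons a p)
  have "bop (\<lambda>x. complex_of_real a *\<^sub>C x + A (poly_op A p x))"
  proof (rule bop_plus)
    show "bop (\<lambda>x. complex_of_real a *\<^sub>C x)" using bop_smult[OF bop_id] .
    show "bop (\<lambda>x. A (poly_op A p x))" using pCons by (auto intro: bop_comp[of A "poly_op A p"])
  qed
  moreover have "poly_op A (pCons a p) = (\<lambda>x. complex_of_real a *\<^sub>C x + A (poly_op A p x))"
    using pCons.prems by (simp add: poly_op_pCons fun_eq_iff)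
  ultimately show ?case by simp
qed

lemma poly_op_add: "bop A \<Longrightarrow> poly_op A (p + q) x = poly_op A p x + poly_op A q x"
proof (induction p q arbitrary: x rule: poly_induct2)
  case 0 then show ?case by simp
next
  case (pCons a p b q)
  then show ?case
    by (simp add: poly_op_pCons bop_add scaleC_add_left algebra_simps)
qed

lemma poly_op_smult: "bop A \<Longrightarrow> poly_op A (smult c p) x = complex_of_real c *\<^sub>C poly_op A p x"
proof (induction p arbitrary: x)
  case 0 then show ?case by simp
next
  case (pCons a p)
  then show ?case
    by (simp add: poly_op_pCons bop_scaleC scaleC_add_right scaleC_scaleC)
qed

lemma poly_op_minus: "bop A \<Longrightarrow> poly_op A (- p) x = - poly_op A p x"
  using poly_op_smult[of A "-1" p x] by (simp add: scaleC_minus_left)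

lemma poly_op_diff: "bop A \<Longrightarrow> poly_op A (p - q) x = poly_op A p x - poly_op A q x"
  using poly_op_add[of A p "- q" x] poly_op_minus[of A q x] by simp

lemma poly_op_mult: "bop A \<Longrightarrow> poly_op A (p * q) x = poly_op A p (poly_op A q x)"
proof (induction p arbitrary: x)
  case 0 then show ?case by simp
next
  case (pCons a p)
  have "poly_op A (pCons a p * q) x = poly_op A (smult a q + pCons 0 (p * q)) x" by simp
  also have "\<dots> = complex_of_real a *\<^sub>C poly_op A q x + A (poly_op A p (poly_op A q x))"
    using pCons by (simp add: poly_op_add poly_op_smult poly_op_pCons)
  also have "\<dots> = poly_op A (pCons a p) (poly_op A q x)"
    using pCons by (simp add: poly_op_pCons)
  finally show ?case .
qed

lemma poly_op_commute: "bop A \<Longrightarrow> poly_op A p (poly_op A q x) = poly_op A q (poly_op A p x)"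
  by (metis poly_op_mult mult.commute)

lemma poly_op_commute_A: "bop A \<Longrightarrow> poly_op A p (A x) = A (poly_op A p x)"
  using poly_op_commute[of A p "[:0,1:]" x] by (simp add: poly_op_X)

definition selfadj :: "('a::complex_inner \<Rightarrow> 'a) \<Rightarrow> bool" where
  "selfadj A \<longleftrightarrow> bop A \<and> (\<forall>x y. cinner (A x) y = cinner x (A y))"

definition posop :: "('a::complex_inner \<Rightarrow> 'a) \<Rightarrow> bool" where
  "posop A \<longleftrightarrow> selfadj A \<and> (\<forall>x. 0 \<le> Re (cinner (A x) x))"

lemma selfadj_bop: "selfadj A \<Longrightarrow> bop A" by (simp add: selfadj_def)
lemma selfadj_sym: "selfadj A \<Longrightarrow> cinner (A x) y = cinner x (A y)" by (simp add: selfadj_def)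
lemma posop_selfadj: "posop A \<Longrightarrow> selfadj A" by (simp add: posop_def)
lemma posop_bop: "posop A \<Longrightarrow> bop A" by (simp add: posop_def selfadj_def)
lemma posop_nonneg: "posop A \<Longrightarrow> 0 \<le> Re (cinner (A x) x)" by (simp add: posop_def)

lemma selfadj_Im: "selfadj A \<Longrightarrow> Im (cinner (A x) x) = 0"
proof -
  assume "selfadj A"
  then have "cinner (A x) x = cnj (cinner (A x) x)"
    by (metis selfadj_sym cinner_commute)
  then show ?thesis by (metis Reals_cnj_iff complex_is_Real_iff)
qed

lemma selfadj_real: "selfadj A \<Longrightarrow> cinner (A x) x = complex_of_real (Re (cinner (A x) x))"
  using selfadj_Im by (simp add: complex_eq_iff)

lemma selfadj_poly: "selfadj A \<Longrightarrow> selfadj (poly_op A p)"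
proof (induction p)
  case 0 then show ?case by (simp add: selfadj_def bop_0)
next
  case (pCons a p)
  then have A: "bop A" by (simp add: selfadj_def)
  show ?case unfolding selfadj_def
  proof (intro conjI allI)
    show "bop (poly_op A (pCons a p))" by (rule poly_op_bop[OF A])
    fix x y
    show "cinner (poly_op A (pCons a p) x) y = cinner x (poly_op A (pCons a p) y)"
      using pCons selfadj_sym[OF pCons(2)]
      by (simp add: poly_op_pCons[OF A] cinner_add_left cinner_add_right cinner_scaleC_left
          cinner_scaleC_right selfadj_sym poly_op_commute_A[OF A])
  qed
qed

lemma selfadj_sum: "selfadj A \<Longrightarrow> selfadj B \<Longrightarrow> selfadj (\<lambda>x. A x + B x)"
  by (simp add: selfadj_def bop_plus cinner_add_left cinner_add_right)

lemma posop_sum: "posop A \<Longrightarrow> posop B \<Longrightarrow> posop (\<lambda>x. A x + B x)"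
  by (simp add: posop_def selfadj_sum cinner_add_left add_nonneg_nonneg)

lemma posop_conj:
  assumes "posop C" "selfadj X" shows "posop (\<lambda>x. X (C (X x)))"
  unfolding posop_def selfadj_def
proof (intro conjI allI)
  show "bop (\<lambda>x. X (C (X x)))"
    using assms bop_comp[of X "\<lambda>x. C (X x)"] bop_comp[of C X] by (auto simp: posop_bop selfadj_bop)
  fix x y
  show "cinner (X (C (X x))) y = cinner x (X (C (X y)))"
    using assms by (simp add: selfadj_sym posop_selfadj)
  show "0 \<le> Re (cinner (X (C (X x))) x)"
    using assms by (simp add: selfadj_sym posop_nonneg)
qed

lemma posop_CS:
  assumes P: "posop A"
  shows "(cmod (cinner (A x) y))\<^sup>2 \<le> Re (cinner (A x) x) * Re (cinner (A y) y)"
proof -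
  define w where "w = cinner (A x) y"
  define p where "p = Re (cinner (A x) x)"
  define q where "q = Re (cinner (A y) y)"
  have A: "bop A" using P by (rule posop_bop)
  have sa: "selfadj A" using P by (rule posop_selfadj)
  have p0: "0 \<le> p" "0 \<le> q" using P by (auto simp: p_def q_def posop_nonneg)
  have key: "0 \<le> p - 2 * r * (cmod w)\<^sup>2 + r\<^sup>2 * (cmod w)\<^sup>2 * q" for r :: real
  proof -
    define s where "s = - complex_of_real r * cnj w"
    have "0 \<le> Re (cinner (A (x + s *\<^sub>C y)) (x + s *\<^sub>C y))" using P by (rule posop_nonneg)
    also have "cinner (A (x + s *\<^sub>C y)) (x + s *\<^sub>C y)
        = cinner (A x) x + s * w + cnj s * cinner (A y) x + cnj s * s * cinner (A y) y"
      by (simp add: bop_add[OF A] bop_scaleC[OF A] cinner_add_left cinner_add_right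
          cinner_scaleC_left cinner_scaleC_right w_def algebra_simps)
    also have "cinner (A y) x = cnj w"
      unfolding w_def by (subst cinner_commute) (simp add: selfadj_sym[OF sa])
    also have "s * w = - of_real (r * (cmod w)\<^sup>2)"
    proof -
      have "cnj w * w = of_real ((cmod w)\<^sup>2)" by (simp only: complex_norm_square mult.commute)
      then show ?thesis by (simp add: s_def mult.assoc)
    qed
    also have "cnj s * cnj w = - of_real (r * (cmod w)\<^sup>2)"
    proof -
      have "w * cnj w = of_real ((cmod w)\<^sup>2)" by (simp only: complex_norm_square)
      then show ?thesis by (simp add: s_def mult.assoc)
    qed
    also have "cnj s * s = of_real (r\<^sup>2 * (cmod w)\<^sup>2)"
    proof -
      have "w * cnj w = of_real ((cmod w)\<^sup>2)" by (simp only: complex_norm_square)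
      then show ?thesis by (simp add: s_def power2_eq_square algebra_simps)
    qed
    finally show ?thesis by (simp add: p_def q_def)
  qed
  show ?thesis
  proof (cases "q = 0")
    case True
    have "(cmod w)\<^sup>2 \<le> 0"
    proof (rule ccontr)
      assume "\<not> (cmod w)\<^sup>2 \<le> 0"
      then have pos: "0 < (cmod w)\<^sup>2" by simp
      have "0 \<le> p - 2 * ((p + 1) / (cmod w)\<^sup>2) * (cmod w)\<^sup>2" using key[of "(p+1) / (cmod w)\<^sup>2"] True by simp
      also have "\<dots> = p - 2 * (p + 1)" using pos by simp
      finally show False using p0 by simp
    qed
    then show ?thesis using p0 by (simp add: w_def[symmetric] p_def[symmetric] q_def[symmetric])
  next
    case False
    then have q0: "0 < q" using p0 by simp
    have "0 \<le> p - 2 * (1/q) * (cmod w)\<^sup>2 + (1/q)\<^sup>2 * (cmod w)\<^sup>2 * q" by (rule key)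
    also have "\<dots> = p - (cmod w)\<^sup>2 / q" using q0 by (simp add: power2_eq_square field_simps)
    finally have "(cmod w)\<^sup>2 \<le> p * q" using q0 by (simp add: field_simps)
    then show ?thesis by (simp add: w_def[symmetric] p_def[symmetric] q_def[symmetric])
  qed
qed

lemma posop_norm_sq:
  assumes P: "posop A"
  shows "(norm (A x))\<^sup>2 \<le> onorm A * Re (cinner (A x) x)"
proof (cases "A x = 0")
  case True then show ?thesis using P by (simp add: posop_nonneg bop_onorm_nonneg posop_bop)
next
  case False
  have A: "bop A" using P by (rule posop_bop)
  have "((norm (A x))\<^sup>2)\<^sup>2 = (cmod (cinner (A x) (A x)))\<^sup>2" by (simp add: cinner_self_cmod)
  also have "\<dots> \<le> Re (cinner (A x) x) * Re (cinner (A (A x)) (A x))" by (rule posop_CS[OF P])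
  also have "Re (cinner (A (A x)) (A x)) \<le> onorm A * (norm (A x))\<^sup>2"
  proof -
    have "Re (cinner (A (A x)) (A x)) \<le> cmod (cinner (A (A x)) (A x))" by (rule complex_Re_le_cmod)
    also have "\<dots> \<le> norm (A (A x)) * norm (A x)" by (rule Cauchy_Schwarz_c)
    also have "\<dots> \<le> onorm A * norm (A x) * norm (A x)"
      by (intro mult_right_mono bop_onorm[OF A]) auto
    finally show ?thesis by (simp add: power2_eq_square mult.assoc)
  qed
  then have "Re (cinner (A x) x) * Re (cinner (A (A x)) (A x)) \<le> Re (cinner (A x) x) * (onorm A * (norm (A x))\<^sup>2)"
    using P by (intro mult_left_mono posop_nonneg) auto
  finally have "(norm (A x))\<^sup>2 * (norm (A x))\<^sup>2 \<le> (onorm A * Re (cinner (A x) x)) * (norm (A x))\<^sup>2"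
    by (simp add: power2_eq_square ac_simps)
  moreover have "0 < (norm (A x))\<^sup>2" using False by simp
  ultimately show ?thesis by (rule mult_right_le_imp_le)
qed

lemma posop_le_onorm:
  assumes P: "posop A" shows "Re (cinner (A x) x) \<le> onorm A * (norm x)\<^sup>2"
proof -
  have "Re (cinner (A x) x) \<le> cmod (cinner (A x) x)" by (rule complex_Re_le_cmod)
  also have "\<dots> \<le> norm (A x) * norm x" by (rule Cauchy_Schwarz_c)
  also have "\<dots> \<le> onorm A * norm x * norm x"
    using P by (intro mult_right_mono bop_onorm posop_bop) auto
  finally show ?thesis by (simp add: power2_eq_square mult.assoc)
qed


section \<open>Positivity certificates for polynomials on an interval\<close>

definition evc :: "real poly \<Rightarrow> complex \<Rightarrow> complex" where
  "evc p z = poly (map_poly complex_of_real p) z"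

lemma cmod_sq_expand: "cmod z * cmod z = Re z * Re z + Im z * Im z"
  using cmod_power2[of z] by (simp add: power2_eq_square)

lemma evc_0 [simp]: "evc 0 z = 0" by (simp add: evc_def)
lemma evc_pCons: "evc (pCons a p) z = of_real a + z * evc p z"
  by (simp add: evc_def map_poly_pCons)

lemma evc_add: "evc (p + q) z = evc p z + evc q z"
proof (induction p q rule: poly_induct2)
  case 0 then show ?case by simp
next
  case (pCons a p b q) then show ?case by (simp add: evc_pCons algebra_simps)
qed

lemma evc_smult: "evc (smult c p) z = of_real c * evc p z"
  by (induction p) (simp_all add: evc_pCons algebra_simps)

lemma evc_mult: "evc (p * q) z = evc p z * evc q z"
proof (induction p)
  case 0 then show ?case by simp
next
  case (pCons a p)
  have "evc (pCons a p * q) z = evc (smult a q + pCons 0 (p * q)) z" by simp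
  also have "\<dots> = of_real a * evc q z + z * (evc p z * evc q z)"
    using pCons by (simp add: evc_add evc_smult evc_pCons)
  finally show ?case by (simp add: evc_pCons algebra_simps)
qed

lemma evc_real: "evc p (of_real r) = of_real (poly p r)"
  by (induction p) (simp_all add: evc_pCons)

lemma evc_root_exists:
  assumes "degree p > 0" shows "\<exists>z. evc p z = 0"
proof -
  have "degree (map_poly complex_of_real p) = degree p" by (rule degree_map_poly) simp
  then have "\<not> constant (poly (map_poly complex_of_real p))" using assms by (simp add: constant_degree)
  then show ?thesis unfolding evc_def by (rule fundamental_theorem_of_algebra)
qed

inductive cert :: "real \<Rightarrow> real poly \<Rightarrow> bool" for M where
  c1: "cert M (g * g)"
| c2: "cert M (g * g * [:0, 1:])"
| c3: "cert M (g * g * [:M, -1:])"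
| c4: "cert M (g * g * ([:0, 1:] * [:M, -1:]))"
| cadd: "cert M p \<Longrightarrow> cert M q \<Longrightarrow> cert M (p + q)"

lemma cert_mult_X: "cert M p \<Longrightarrow> cert M ([:0, 1:] * p)"
proof (induction rule: cert.induct)
  case (c1 g)
  have "[:0,1:] * (g * g) = g * g * [:0,1:]" by (simp only: mult_ac)
  then show ?case using cert.c2[of M g] by (simp only:)
next
  case (c2 g)
  have "[:0,1:] * (g * g * [:0,1:]) = (g * [:0,1:]) * (g * [:0,1:])" by (simp only: mult_ac)
  then show ?case using cert.c1[of M "g * [:0,1:]"] by (simp only:)
next
  case (c3 g)
  have "[:0,1:] * (g * g * [:M,-1:]) = g * g * ([:0,1:] * [:M,-1:])" by (simp only: mult_ac)
  then show ?case using cert.c4[of M g] by (simp only:)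
next
  case (c4 g)
  have "[:0,1:] * (g * g * ([:0,1:] * [:M,-1:])) = (g * [:0,1:]) * (g * [:0,1:]) * [:M,-1:]"
    by (simp only: mult_ac)
  then show ?case using cert.c3[of M "g * [:0,1:]"] by (simp only:)
next
  case (cadd p q)
  then have "cert M ([:0, 1:] * p + [:0, 1:] * q)" by (intro cert.cadd)
  then show ?case by (simp only: distrib_left)
qed

lemma cert_mult_MX: "cert M p \<Longrightarrow> cert M ([:M, -1:] * p)"
proof (induction rule: cert.induct)
  case (c1 g)
  have "[:M,-1:] * (g * g) = g * g * [:M,-1:]" by (simp only: mult_ac)
  then show ?case using cert.c3[of M g] by (simp only:)
next
  case (c2 g)
  have "[:M,-1:] * (g * g * [:0,1:]) = g * g * ([:0,1:] * [:M,-1:])" by (simp only: mult_ac)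
  then show ?case using cert.c4[of M g] by (simp only:)
next
  case (c3 g)
  have "[:M,-1:] * (g * g * [:M,-1:]) = (g * [:M,-1:]) * (g * [:M,-1:])" by (simp only: mult_ac)
  then show ?case using cert.c1[of M "g * [:M,-1:]"] by (simp only:)
next
  case (c4 g)
  have "[:M,-1:] * (g * g * ([:0,1:] * [:M,-1:])) = (g * [:M,-1:]) * (g * [:M,-1:]) * [:0,1:]"
    by (simp only: mult_ac)
  then show ?case using cert.c2[of M "g * [:M,-1:]"] by (simp only:)
next
  case (cadd p q)
  then have "cert M ([:M, -1:] * p + [:M, -1:] * q)" by (intro cert.cadd)
  then show ?case by (simp only: distrib_left)
qed

lemma cert_mult_sq: "cert M p \<Longrightarrow> cert M (h * h * p)"
proof (induction rule: cert.induct)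
  case (c1 g)
  have "h * h * (g * g) = (h * g) * (h * g)" by (simp only: mult_ac)
  then show ?case using cert.c1[of M "h * g"] by (simp only:)
next
  case (c2 g)
  have "h * h * (g * g * [:0,1:]) = (h * g) * (h * g) * [:0,1:]" by (simp only: mult_ac)
  then show ?case using cert.c2[of M "h * g"] by (simp only:)
next
  case (c3 g)
  have "h * h * (g * g * [:M,-1:]) = (h * g) * (h * g) * [:M,-1:]" by (simp only: mult_ac)
  then show ?case using cert.c3[of M "h * g"] by (simp only:)
next
  case (c4 g)
  have "h * h * (g * g * ([:0,1:] * [:M,-1:])) = (h * g) * (h * g) * ([:0,1:] * [:M,-1:])"
    by (simp only: mult_ac)
  then show ?case using cert.c4[of M "h * g"] by (simp only:)
next
  case (cadd p q)
  then have "cert M (h * h * p + h * h * q)" by (intro cert.cadd)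
  then show ?case by (simp only: distrib_left)
qed

lemma cert_smult: "0 \<le> c \<Longrightarrow> cert M p \<Longrightarrow> cert M (smult c p)"
proof -
  assume "0 \<le> c" "cert M p"
  then have "cert M ([:sqrt c:] * [:sqrt c:] * p)" by (intro cert_mult_sq)
  moreover have "[:sqrt c:] * [:sqrt c:] * p = smult c p"
    using \<open>0 \<le> c\<close> by (simp add: real_sqrt_mult[symmetric])
  ultimately show ?thesis by simp
qed

lemma cert_const: "0 \<le> c \<Longrightarrow> cert M [:c:]"
  using cert.c1[of M "[:sqrt c:]"] by (simp add: real_sqrt_mult[symmetric])

lemma quad_dvd:
  fixes p :: "real poly"
  assumes z: "evc p z = 0" and im: "Im z \<noteq> 0"
  shows "[:(cmod z)\<^sup>2, - 2 * Re z, 1:] dvd p"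
proof -
  define Q where "Q = [:(cmod z)\<^sup>2, - 2 * Re z, 1:]"
  have Q0: "Q \<noteq> 0" by (simp add: Q_def)
  have degQ: "degree Q = 2" by (simp add: Q_def)
  have h: "cmod z * cmod z = Re z * Re z + Im z * Im z"
    using cmod_power2[of z] by (simp add: power2_eq_square)
  have Qz: "evc Q z = 0"
    by (simp add: Q_def evc_pCons h complex_eq_iff power2_eq_square algebra_simps)
  define r where "r = p mod Q"
  have "p = Q * (p div Q) + r" by (simp add: r_def)
  then have "evc p z = evc Q z * evc (p div Q) z + evc r z"
    by (metis evc_add evc_mult)
  then have rz: "evc r z = 0" using z Qz by simp
  have "degree r < 2 \<or> r = 0" using degree_mod_less[OF Q0, of p] degQ by (auto simp: r_def)
  then have "degree r \<le> 1" by auto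
  then obtain c0 c1 where r: "r = [:c0, c1:]"
  proof -
    assume deg: "degree r \<le> 1" and th: "\<And>c0 c1. r = [:c0, c1:] \<Longrightarrow> thesis"
    obtain c0 r' where rr: "r = pCons c0 r'" by (cases r)
    have "degree r' = 0" using deg rr by (cases "r' = 0") auto
    then obtain c1 where "r' = [:c1:]" by (metis degree_eq_zeroE)
    then show thesis using th rr by simp
  qed
  have "of_real c0 + z * of_real c1 = 0" using rz by (simp add: r evc_pCons)
  then have "Im (of_real c0 + z * of_real c1) = 0" "Re (of_real c0 + z * of_real c1) = 0" by simp_all
  then have "c1 = 0" "c0 = 0" using im by auto
  then have "r = 0" by (simp add: r)
  then show ?thesis by (simp add: Q_def r_def mod_eq_0_iff_dvd)
qed

lemma pos_quotient:
  fixes p L q :: "real poly"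
  assumes "p = L * q" "\<And>s. s \<in> S \<Longrightarrow> poly L s > 0" "\<And>s. s \<in> S \<Longrightarrow> poly p s > 0"
  shows "\<And>s. s \<in> S \<Longrightarrow> poly q s > 0"
proof -
  fix s assume "s \<in> S"
  then have "poly L s * poly q s > 0" "poly L s > 0" using assms by auto
  then show "poly q s > 0" by (simp add: zero_less_mult_iff)
qed

theorem cert_exists:
  fixes p :: "real poly"
  assumes M: "0 \<le> M" and pos: "\<And>s. s \<in> {0..M} \<Longrightarrow> poly p s > 0"
  shows "cert M p"
  using pos
proof (induction "degree p" arbitrary: p rule: less_induct)
  case less
  show ?case
  proof (cases "degree p = 0")
    case True
    then obtain c where "p = [:c:]" by (metis degree_eq_zeroE)
    moreover have "poly p 0 > 0" using less.prems M by auto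
    ultimately show ?thesis by (auto intro: cert_const)
  next
    case False
    then obtain z where z: "evc p z = 0" using evc_root_exists by blast
    show ?thesis
    proof (cases "Im z = 0")
      case True
      define r where "r = Re z"
      have "z = of_real r" using True by (simp add: r_def complex_eq_iff)
      then have "poly p r = 0" using z by (simp add: evc_real)
      then obtain q where pq: "p = [:- r, 1:] * q" using poly_eq_0_iff_dvd by (metis dvdE)
      have q0: "q \<noteq> 0" using pq False by auto
      have dq: "degree q < degree p" using pq q0 degree_mult_eq[of "[:- r, 1:]" q] by simp
      have rout: "r < 0 \<or> r > M"
      proof (rule ccontr)
        assume "\<not> (r < 0 \<or> r > M)"
        then have "r \<in> {0..M}" by auto
        then show False using less.prems \<open>poly p r = 0\<close> by fastforce
      qed
      then show ?thesis
      proof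
        assume r0: "r < 0"
        have Lpos: "\<And>s. s \<in> {0..M} \<Longrightarrow> poly [:- r, 1:] s > 0" using r0 by auto
        have qpos: "\<And>s. s \<in> {0..M} \<Longrightarrow> poly q s > 0"
          using pos_quotient[OF pq Lpos less.prems] by blast
        have "cert M q" using less.hyps[OF dq qpos] .
        then have "cert M ([:0,1:] * q + smult (- r) q)"
          using r0 by (intro cert.cadd cert_mult_X cert_smult) auto
        moreover have "[:0,1:] * q + smult (- r) q = p" by (simp add: pq algebra_simps)
        ultimately show ?thesis by simp
      next
        assume rM: "r > M"
        have pq': "p = [:r, -1:] * (- q)" using pq by simp
        have Lpos: "\<And>s. s \<in> {0..M} \<Longrightarrow> poly [:r, -1:] s > 0" using rM by auto
        have qpos: "\<And>s. s \<in> {0..M} \<Longrightarrow> poly (- q) s > 0"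
          using pos_quotient[OF pq' Lpos less.prems] by blast
        have dq': "degree (- q) < degree p" using dq by simp
        have "cert M (- q)" using less.hyps[OF dq' qpos] .
        then have "cert M ([:M,-1:] * (- q) + smult (r - M) (- q))"
          using rM by (intro cert.cadd cert_mult_MX cert_smult) auto
        moreover have "[:M,-1:] * (- q) + smult (r - M) (- q) = p"
          by (simp add: pq algebra_simps flip: smult_add_left)
        ultimately show ?thesis by simp
      qed
    next
      case False
      define a where "a = Re z"
      define b where "b = Im z"
      obtain q where pq: "p = [:(cmod z)\<^sup>2, - 2 * Re z, 1:] * q"
        using quad_dvd[OF z False] by (metis dvdE)
      have Qeq: "[:(cmod z)\<^sup>2, - 2 * Re z, 1:] = [:- a, 1:] * [:- a, 1:] + [:b:] * [:b:]"
        by (simp add: a_def b_def cmod_sq_expand power2_eq_square)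
      have Qpos: "poly [:(cmod z)\<^sup>2, - 2 * Re z, 1:] s > 0" for s
      proof -
        have "poly [:(cmod z)\<^sup>2, - 2 * Re z, 1:] s = (s - a)\<^sup>2 + b\<^sup>2"
          by (subst Qeq) (simp add: power2_eq_square algebra_simps)
        moreover have "b\<^sup>2 > 0" using False by (simp add: b_def)
        ultimately show ?thesis by (simp add: add_nonneg_pos)
      qed
      have q0: "q \<noteq> 0" using pq \<open>degree p \<noteq> 0\<close> by auto
      have dq: "degree q < degree p"
        using pq q0 degree_mult_eq[of "[:(cmod z)\<^sup>2, - 2 * Re z, 1:]" q] by simp
      have qpos: "\<And>s. s \<in> {0..M} \<Longrightarrow> poly q s > 0"
        using pos_quotient[OF pq _ less.prems] Qpos by blast
      have "cert M q" using less.hyps[OF dq qpos] .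
      then have "cert M ([:- a, 1:] * [:- a, 1:] * q + [:b:] * [:b:] * q)"
        by (intro cert.cadd cert_mult_sq)
      moreover have "[:- a, 1:] * [:- a, 1:] * q + [:b:] * [:b:] * q = p"
        by (simp only: pq Qeq distrib_right)
      ultimately show ?thesis by simp
    qed
  qed
qed


section \<open>Positivity of polynomials of positive operators\<close>

lemma poly_op_one: "poly_op A 1 x = x"
  using poly_op_const[of A 1 x] by (simp add: one_pCons)

lemma posop_id: "posop (\<lambda>x. x)"
  by (simp add: posop_def selfadj_def bop_id cinner_self_Re)

lemma posop_cong: "posop A \<Longrightarrow> (\<And>x. B x = A x) \<Longrightarrow> posop B"
proof -
  assume "posop A" "\<And>x. B x = A x"
  then have "B = A" by blast
  with \<open>posop A\<close> show ?thesis by simp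
qed

lemma poly_op_MX: "bop A \<Longrightarrow> poly_op A [:M, -1:] x = complex_of_real M *\<^sub>C x - A x"
  by (simp add: poly_op_pCons poly_op_const bop_minus scaleC_minus_left)

lemma posop_core:
  assumes P: "posop A" and M: "M = onorm A"
  shows "posop (poly_op A [:0,1:])" "posop (poly_op A [:M,-1:])"
    "posop (poly_op A ([:0,1:] * [:M,-1:]))"
proof -
  have A: "bop A" using P by (rule posop_bop)
  have sa: "selfadj A" using P by (rule posop_selfadj)
  show "posop (poly_op A [:0,1:])" using P by (rule posop_cong) (simp add: poly_op_X[OF A])
  show "posop (poly_op A [:M,-1:])"
    unfolding posop_def
  proof (intro conjI allI)
    show "selfadj (poly_op A [:M, -1:])" using sa by (rule selfadj_poly)
    fix x
    have "Re (cinner (poly_op A [:M, -1:] x) x) = M * (norm x)\<^sup>2 - Re (cinner (A x) x)"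
      by (simp add: poly_op_MX[OF A] cinner_diff_left cinner_scaleC_left cinner_self_Re)
    also have "\<dots> \<ge> 0" using posop_le_onorm[OF P, of x] M by simp
    finally show "0 \<le> Re (cinner (poly_op A [:M, -1:] x) x)" .
  qed
  show "posop (poly_op A ([:0,1:] * [:M,-1:]))"
    unfolding posop_def
  proof (intro conjI allI)
    show "selfadj (poly_op A ([:0,1:] * [:M,-1:]))" using sa by (rule selfadj_poly)
    fix x
    have e1: "poly_op A ([:0,1:] * [:M,-1:]) x = complex_of_real M *\<^sub>C A x - A (A x)"
      by (simp only: poly_op_mult[OF A] poly_op_X[OF A] poly_op_MX[OF A] bop_diff[OF A] bop_scaleC[OF A])
    have e2: "cinner (A (A x)) x = cinner (A x) (A x)" by (rule selfadj_sym[OF sa])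
    have "Re (cinner (poly_op A ([:0,1:] * [:M,-1:]) x) x) = M * Re (cinner (A x) x) - (norm (A x))\<^sup>2"
      unfolding e1 by (simp add: cinner_diff_left cinner_scaleC_left e2 cinner_self_Re)
    also have "\<dots> \<ge> 0" using posop_norm_sq[OF P, of x] M by simp
    finally show "0 \<le> Re (cinner (poly_op A ([:0,1:] * [:M,-1:]) x) x)" .
  qed
qed

lemma posop_sq_mult:
  assumes P: "posop A" and Pm: "posop (poly_op A m)"
  shows "posop (poly_op A (g * g * m))"
proof -
  have A: "bop A" using P by (rule posop_bop)
  have sa: "selfadj A" using P by (rule posop_selfadj)
  have "posop (\<lambda>x. poly_op A g (poly_op A m (poly_op A g x)))"
    using Pm selfadj_poly[OF sa] by (rule posop_conj)
  then show ?thesis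
  proof (rule posop_cong)
    fix x
    have "g * g * m = g * (m * g)" by (simp only: mult_ac)
    then show "poly_op A (g * g * m) x = poly_op A g (poly_op A m (poly_op A g x))"
      by (simp only: poly_op_mult[OF A])
  qed
qed

lemma cert_posop:
  assumes P: "posop A" and M: "M = onorm A" and c: "cert M p"
  shows "posop (poly_op A p)"
  using c
proof (induction rule: cert.induct)
  case (c1 g)
  have "posop (poly_op A 1)" by (rule posop_cong[OF posop_id]) (simp add: poly_op_one)
  then show ?case using posop_sq_mult[OF P, of 1 g] by simp
next
  case (c2 g) show ?case using posop_sq_mult[OF P posop_core(1)[OF P M]] .
next
  case (c3 g) show ?case using posop_sq_mult[OF P posop_core(2)[OF P M]] .
next
  case (c4 g) show ?case using posop_sq_mult[OF P posop_core(3)[OF P M]] .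
next
  case (cadd p q)
  have "posop (\<lambda>x. poly_op A p x + poly_op A q x)" using cadd by (intro posop_sum)
  then show ?case by (rule posop_cong) (simp add: poly_op_add[OF posop_bop[OF P]])
qed

lemma poly_pos_op:
  assumes P: "posop A" and pos: "\<And>s. s \<in> {0..onorm A} \<Longrightarrow> poly p s > 0"
  shows "0 \<le> Re (cinner (poly_op A p x) x)"
proof -
  have "cert (onorm A) p"
    using pos by (intro cert_exists) (auto simp: bop_onorm_nonneg posop_bop[OF P])
  then have "posop (poly_op A p)" using cert_posop[OF P refl] by blast
  then show ?thesis by (rule posop_nonneg)
qed

lemma poly_nonneg_op:
  assumes P: "posop A" and pos: "\<And>s. s \<in> {0..onorm A} \<Longrightarrow> poly p s \<ge> 0"
  shows "0 \<le> Re (cinner (poly_op A p x) x)"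
proof (rule field_le_epsilon)
  fix e :: real assume e: "0 < e"
  define e' where "e' = e / ((norm x)\<^sup>2 + 1)"
  have d: "0 < (norm x)\<^sup>2 + 1" by (simp add: add_nonneg_pos)
  have e'0: "0 < e'" using e d by (simp add: e'_def)
  have "0 \<le> Re (cinner (poly_op A (p + [:e':]) x) x)"
    using pos e'0 by (intro poly_pos_op[OF P]) (auto simp: add_nonneg_pos)
  also have "\<dots> = Re (cinner (poly_op A p x) x) + e' * (norm x)\<^sup>2"
    by (simp add: poly_op_add[OF posop_bop[OF P]] poly_op_const cinner_add_left cinner_scaleC_left
        cinner_self_Re)
  finally have "0 \<le> Re (cinner (poly_op A p x) x) + e' * (norm x)\<^sup>2" .
  moreover have "e' * (norm x)\<^sup>2 \<le> e"
    using e d by (simp add: e'_def field_simps)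
  ultimately show "0 \<le> Re (cinner (poly_op A p x) x) + e" by linarith
qed

lemma poly_op_norm_bound:
  assumes P: "posop A" and bnd: "\<And>s. s \<in> {0..onorm A} \<Longrightarrow> \<bar>poly p s\<bar> \<le> c"
  shows "norm (poly_op A p x) \<le> c * norm x"
proof -
  have A: "bop A" using P by (rule posop_bop)
  have sa: "selfadj A" using P by (rule posop_selfadj)
  have c0: "0 \<le> c" using bnd[of 0] bop_onorm_nonneg[OF A] by force
  have "0 \<le> Re (cinner (poly_op A ([:c\<^sup>2:] - p * p) x) x)"
  proof (rule poly_nonneg_op[OF P])
    fix s assume "s \<in> {0..onorm A}"
    then have "\<bar>poly p s\<bar> \<le> c" by (rule bnd)
    then have "\<bar>poly p s\<bar>\<^sup>2 \<le> c\<^sup>2" by (rule power_mono) simp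
    then have "(poly p s)\<^sup>2 \<le> c\<^sup>2" by simp
    then show "0 \<le> poly ([:c\<^sup>2:] - p * p) s" by (simp add: power2_eq_square)
  qed
  also have "Re (cinner (poly_op A ([:c\<^sup>2:] - p * p) x) x) = c\<^sup>2 * (norm x)\<^sup>2 - (norm (poly_op A p x))\<^sup>2"
  proof -
    have e1: "poly_op A ([:c\<^sup>2:] - p * p) x = complex_of_real (c\<^sup>2) *\<^sub>C x - poly_op A p (poly_op A p x)"
      by (simp only: poly_op_diff[OF A] poly_op_mult[OF A] poly_op_const)
    have e2: "cinner (poly_op A p (poly_op A p x)) x = cinner (poly_op A p x) (poly_op A p x)"
      by (rule selfadj_sym[OF selfadj_poly[OF sa]])
    show ?thesis unfolding e1 by (simp add: cinner_diff_left cinner_scaleC_left e2 cinner_self_Re)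
  qed
  finally have "(norm (poly_op A p x))\<^sup>2 \<le> (c * norm x)\<^sup>2" by (simp add: power_mult_distrib)
  then show ?thesis using c0 by (simp add: power2_le_iff_abs_le)
qed


section \<open>Existence of the continuous functional calculus\<close>

definition ulim :: "real \<Rightarrow> (nat \<Rightarrow> real poly) \<Rightarrow> (real \<Rightarrow> real) \<Rightarrow> bool" where
  "ulim M P f \<longleftrightarrow> uniform_limit {0..M} (\<lambda>n s. poly (P n) s) f sequentially"

lemma ulimD:
  assumes "ulim M P f" "0 < e"
  shows "\<exists>N. \<forall>n\<ge>N. \<forall>s\<in>{0..M}. \<bar>poly (P n) s - f s\<bar> < e"
  using uniform_limitD[OF assms(1)[unfolded ulim_def] assms(2)]
  by (simp add: eventually_sequentially dist_real_def)

lemma ulimI: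
  assumes "\<And>e. 0 < e \<Longrightarrow> \<exists>N. \<forall>n\<ge>N. \<forall>s\<in>{0..M}. \<bar>poly (P n) s - f s\<bar> < e"
  shows "ulim M P f"
  unfolding ulim_def
  by (rule uniform_limitI) (use assms in \<open>simp add: eventually_sequentially dist_real_def\<close>)

lemma poly_approx:
  fixes f :: "real \<Rightarrow> real"
  assumes "continuous_on {0..M} f" "0 < e"
  shows "\<exists>p. \<forall>s\<in>{0..M}. \<bar>f s - poly p s\<bar> < e"
proof -
  obtain g :: "real \<Rightarrow> real" where g: "real_polynomial_function g" "\<And>x. x \<in> {0..M} \<Longrightarrow> \<bar>f x - g x\<bar> < e"
    using Stone_Weierstrass_real_polynomial_function[OF compact_Icc assms] by blast
  obtain a n where gs: "g = (\<lambda>x. \<Sum>i\<le>n. a i * x ^ i)"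
    using g(1) real_polynomial_function_iff_sum by blast
  define p where "p = (\<Sum>i\<le>n. monom (a i) i)"
  have "poly p x = g x" for x by (simp add: p_def poly_sum poly_monom gs)
  then show ?thesis using g(2) by (intro exI[of _ p]) auto
qed

lemma ulim_exists:
  assumes "continuous_on {0..M} f"
  shows "\<exists>P. ulim M P f"
proof -
  have "\<forall>n. \<exists>p. \<forall>s\<in>{0..M}. \<bar>f s - poly p s\<bar> < 1 / Suc n"
    using poly_approx[OF assms] by simp
  then obtain P where P: "\<And>n. \<forall>s\<in>{0..M}. \<bar>f s - poly (P n) s\<bar> < 1 / Suc n" by metis
  have "ulim M P f"
  proof (rule ulimI)
    fix e :: real assume "0 < e"
    then obtain N :: nat where N: "1 / e < N" using reals_Archimedean2 by blast
    have "1 / Suc N < e"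
      using N \<open>0 < e\<close> by (simp add: field_simps)
    show "\<exists>N. \<forall>n\<ge>N. \<forall>s\<in>{0..M}. \<bar>poly (P n) s - f s\<bar> < e"
    proof (intro exI allI impI ballI)
      fix n s assume "N \<le> n" "s \<in> {0..M}"
      have "\<bar>f s - poly (P n) s\<bar> < 1 / Suc n" using P \<open>s \<in> {0..M}\<close> by blast
      also have "1 / Suc n \<le> 1 / Suc N" using \<open>N \<le> n\<close> by (simp add: frac_le)
      finally show "\<bar>poly (P n) s - f s\<bar> < e" using \<open>1 / Suc N < e\<close> by simp
    qed
  qed
  then show ?thesis by blast
qed

lemma frac_lt_helper:
  fixes e a :: real
  assumes "0 < e" "0 \<le> a" shows "e / (a + 1) * a < e"
proof -
  have "0 < a + 1" using assms by simp
  have "e * a < e * (a + 1)" using assms by simp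
  then show ?thesis using \<open>0 < a + 1\<close> by (simp add: field_simps)
qed

lemma op_close:
  assumes P: "posop A" and b: "\<And>s. s \<in> {0..onorm A} \<Longrightarrow> \<bar>poly p s - poly q s\<bar> \<le> c"
  shows "norm (poly_op A p x - poly_op A q x) \<le> c * norm x"
proof -
  have "norm (poly_op A (p - q) x) \<le> c * norm x"
    using b by (intro poly_op_norm_bound[OF P]) simp
  then show ?thesis by (simp add: poly_op_diff[OF posop_bop[OF P]])
qed

lemma ulim_close:
  assumes P: "posop A" and u1: "ulim (onorm A) Q1 f" and u2: "ulim (onorm A) Q2 f" and e: "0 < e"
  shows "\<exists>N. \<forall>n\<ge>N. \<forall>m\<ge>N. \<forall>x. norm (poly_op A (Q1 n) x - poly_op A (Q2 m) x) \<le> e * norm x"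
proof -
  have e2: "0 < e/2" using e by simp
  obtain N1 where N1: "\<And>n s. n \<ge> N1 \<Longrightarrow> s \<in> {0..onorm A} \<Longrightarrow> \<bar>poly (Q1 n) s - f s\<bar> < e/2"
    using ulimD[OF u1 e2] by blast
  obtain N2 where N2: "\<And>n s. n \<ge> N2 \<Longrightarrow> s \<in> {0..onorm A} \<Longrightarrow> \<bar>poly (Q2 n) s - f s\<bar> < e/2"
    using ulimD[OF u2 e2] by blast
  show ?thesis
  proof (intro exI[of _ "max N1 N2"] allI impI)
    fix n m x assume "max N1 N2 \<le> n" "max N1 N2 \<le> m"
    show "norm (poly_op A (Q1 n) x - poly_op A (Q2 m) x) \<le> e * norm x"
    proof (rule op_close[OF P])
      fix s assume "s \<in> {0..onorm A}"
      then have "\<bar>poly (Q1 n) s - f s\<bar> < e/2" "\<bar>poly (Q2 m) s - f s\<bar> < e/2"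
        using N1 N2 \<open>max N1 N2 \<le> n\<close> \<open>max N1 N2 \<le> m\<close> by auto
      then show "\<bar>poly (Q1 n) s - poly (Q2 m) s\<bar> \<le> e" by linarith
    qed
  qed
qed

lemma bop_tendsto: "bop T \<Longrightarrow> X \<longlonglongrightarrow> l \<Longrightarrow> (\<lambda>n. T (X n)) \<longlonglongrightarrow> T l"
  using bounded_linear.tendsto bop_bl by blast

definition cfcP :: "('a::complex_normed_vector \<Rightarrow> 'a) \<Rightarrow> (real \<Rightarrow> real) \<Rightarrow> ('a \<Rightarrow> 'a) \<Rightarrow> bool" where
  "cfcP A f B \<longleftrightarrow> bop B \<and>
     (\<forall>P :: nat \<Rightarrow> real poly.
        uniform_limit {0..onorm A} (\<lambda>n s. poly (P n) s) f sequentially \<longrightarrow>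
        (\<lambda>n. onorm (\<lambda>v. poly_op A (P n) v - B v)) \<longlonglongrightarrow> 0)"

lemma cfc_def': "cfc A f = (THE B. cfcP A f B)"
  unfolding cfc_def cfcP_def by simp

lemma cfcP_exists:
  fixes A :: "'a::chilbert_space \<Rightarrow> 'a"
  assumes P: "posop A" and cf: "continuous_on {0..onorm A} f"
  shows "\<exists>!B. cfcP A f B"
proof -
  have A: "bop A" using P by (rule posop_bop)
  obtain P0 where P0: "ulim (onorm A) P0 f" using ulim_exists[OF cf] by blast
  have conv: "convergent (\<lambda>m. poly_op A (P0 m) x)" for x
  proof -
    have "Cauchy (\<lambda>m. poly_op A (P0 m) x)"
    proof (rule metric_CauchyI)
      fix e :: real assume e: "0 < e"
      have e': "0 < e / (norm x + 1)" using e by (simp add: add_nonneg_pos)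
      obtain N where N: "\<And>n m. n \<ge> N \<Longrightarrow> m \<ge> N \<Longrightarrow>
          norm (poly_op A (P0 n) x - poly_op A (P0 m) x) \<le> (e / (norm x + 1)) * norm x"
        using ulim_close[OF P P0 P0 e'] by blast
      show "\<exists>M. \<forall>m\<ge>M. \<forall>n\<ge>M. dist (poly_op A (P0 m) x) (poly_op A (P0 n) x) < e"
      proof (intro exI allI impI)
        fix m n assume "N \<le> m" "N \<le> n"
        have "dist (poly_op A (P0 m) x) (poly_op A (P0 n) x) \<le> (e / (norm x + 1)) * norm x"
          using N[OF \<open>N \<le> m\<close> \<open>N \<le> n\<close>] by (simp add: dist_norm)
        also have "\<dots> < e" using frac_lt_helper[OF e norm_ge_zero] .
        finally show "dist (poly_op A (P0 m) x) (poly_op A (P0 n) x) < e" .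
      qed
    qed
    then show ?thesis by (simp add: Cauchy_convergent_iff)
  qed
  define B where "B x = lim (\<lambda>m. poly_op A (P0 m) x)" for x
  have B: "(\<lambda>m. poly_op A (P0 m) x) \<longlonglongrightarrow> B x" for x
    unfolding B_def using conv convergent_LIMSEQ_iff by blast
  have L: "\<exists>N. \<forall>n\<ge>N. \<forall>x. norm (poly_op A (Q n) x - B x) \<le> e * norm x"
    if Q: "ulim (onorm A) Q f" and e: "0 < e" for Q e
  proof -
    obtain N where N: "\<And>n m x. n \<ge> N \<Longrightarrow> m \<ge> N \<Longrightarrow>
        norm (poly_op A (Q n) x - poly_op A (P0 m) x) \<le> e * norm x"
      using ulim_close[OF P Q P0 e] by blast
    show ?thesis
    proof (intro exI allI impI)
      fix n x assume "N \<le> n"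
      have "(\<lambda>m. norm (poly_op A (Q n) x - poly_op A (P0 m) x)) \<longlonglongrightarrow> norm (poly_op A (Q n) x - B x)"
        by (intro tendsto_intros B)
      then show "norm (poly_op A (Q n) x - B x) \<le> e * norm x"
        by (rule LIMSEQ_le_const2) (use N \<open>N \<le> n\<close> in blast)
    qed
  qed
  have Bbop: "bop B"
  proof -
    obtain N where N: "\<And>n x. n \<ge> N \<Longrightarrow> norm (poly_op A (P0 n) x - B x) \<le> 1 * norm x"
      using L[OF P0, of 1] by auto
    show ?thesis
    proof (rule bopI[where K="onorm (poly_op A (P0 N)) + 1"])
      fix x y
      have "(\<lambda>m. poly_op A (P0 m) (x + y)) \<longlonglongrightarrow> B x + B y"
        using tendsto_add[OF B[of x] B[of y]] by (simp add: bop_add[OF poly_op_bop[OF A]])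
      then show "B (x + y) = B x + B y" using B[of "x + y"] LIMSEQ_unique by blast
    next
      fix c x
      have "(\<lambda>m. c *\<^sub>C poly_op A (P0 m) x) \<longlonglongrightarrow> c *\<^sub>C B x"
        by (rule bop_tendsto[OF bop_smult[OF bop_id] B])
      then have "(\<lambda>m. poly_op A (P0 m) (c *\<^sub>C x)) \<longlonglongrightarrow> c *\<^sub>C B x"
        by (simp add: bop_scaleC[OF poly_op_bop[OF A]])
      then show "B (c *\<^sub>C x) = c *\<^sub>C B x" using B[of "c *\<^sub>C x"] LIMSEQ_unique by blast
    next
      fix x
      have "norm (B x) = norm (poly_op A (P0 N) x - (poly_op A (P0 N) x - B x))" by simp
      also have "\<dots> \<le> norm (poly_op A (P0 N) x) + norm (poly_op A (P0 N) x - B x)"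
        by (rule norm_triangle_ineq4)
      also have "\<dots> \<le> onorm (poly_op A (P0 N)) * norm x + 1 * norm x"
        by (intro add_mono bop_onorm[OF poly_op_bop[OF A]] N) simp
      finally show "norm (B x) \<le> (onorm (poly_op A (P0 N)) + 1) * norm x" by (simp add: algebra_simps)
    qed
  qed
  have onorm_lim: "(\<lambda>n. onorm (\<lambda>v. poly_op A (Q n) v - B v)) \<longlonglongrightarrow> 0"
    if Q: "ulim (onorm A) Q f" for Q
  proof (rule LIMSEQ_I)
    fix r :: real assume r: "0 < r"
    obtain N where N: "\<And>n x. n \<ge> N \<Longrightarrow> norm (poly_op A (Q n) x - B x) \<le> (r/2) * norm x"
      using L[OF Q, of "r/2"] r by auto
    show "\<exists>no. \<forall>n\<ge>no. norm (onorm (\<lambda>v. poly_op A (Q n) v - B v) - 0) < r"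
    proof (intro exI allI impI)
      fix n assume "N \<le> n"
      have bl: "bop (\<lambda>v. poly_op A (Q n) v - B v)" by (intro bop_minus_op poly_op_bop A Bbop)
      have "onorm (\<lambda>v. poly_op A (Q n) v - B v) \<le> r/2"
        using N[OF \<open>N \<le> n\<close>] r by (intro onorm_bound) auto
      moreover have "0 \<le> onorm (\<lambda>v. poly_op A (Q n) v - B v)" by (rule bop_onorm_nonneg[OF bl])
      ultimately show "norm (onorm (\<lambda>v. poly_op A (Q n) v - B v) - 0) < r" using r by simp
    qed
  qed
  have ex: "cfcP A f B"
    unfolding cfcP_def using Bbop onorm_lim by (auto simp: ulim_def)
  show ?thesis
  proof (rule ex1I[of _ B])
    show "cfcP A f B" by (rule ex)
    fix B' assume B': "cfcP A f B'"
    then have lim': "(\<lambda>n. onorm (\<lambda>v. poly_op A (P0 n) v - B' v)) \<longlonglongrightarrow> 0" and bB': "bop B'"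
      using P0 by (auto simp: cfcP_def ulim_def)
    show "B' = B"
    proof (rule ext)
      fix x :: 'a
      have h: "(\<lambda>n. onorm (\<lambda>v. poly_op A (P0 n) v - B' v) * norm x) \<longlonglongrightarrow> 0 * norm x"
        by (intro tendsto_intros lim')
      have "(\<lambda>n. poly_op A (P0 n) x - B' x) \<longlonglongrightarrow> 0"
      proof (rule Lim_null_comparison[OF always_eventually])
        show "\<forall>n. norm (poly_op A (P0 n) x - B' x) \<le> onorm (\<lambda>v. poly_op A (P0 n) v - B' v) * norm x"
        proof
          fix n
          have "bop (\<lambda>v. poly_op A (P0 n) v - B' v)" by (intro bop_minus_op poly_op_bop A bB')
          then show "norm (poly_op A (P0 n) x - B' x) \<le> onorm (\<lambda>v. poly_op A (P0 n) v - B' v) * norm x"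
            by (rule bop_onorm)
        qed
      qed (use h in simp)
      then have "(\<lambda>n. poly_op A (P0 n) x) \<longlonglongrightarrow> B' x" by (simp add: LIM_zero_iff)
      then show "B' x = B x" using B LIMSEQ_unique by blast
    qed
  qed
qed

lemma cfc_spec:
  fixes A :: "'a::chilbert_space \<Rightarrow> 'a"
  assumes "posop A" "continuous_on {0..onorm A} f"
  shows "cfcP A f (cfc A f)"
  unfolding cfc_def' using cfcP_exists[OF assms] by (rule theI')

lemma cfc_bop:
  fixes A :: "'a::chilbert_space \<Rightarrow> 'a"
  assumes "posop A" "continuous_on {0..onorm A} f"
  shows "bop (cfc A f)"
  using cfc_spec[OF assms] by (simp add: cfcP_def)

lemma cfc_approx:
  fixes A :: "'a::chilbert_space \<Rightarrow> 'a"
  assumes P: "posop A" and cf: "continuous_on {0..onorm A} f" and Q: "ulim (onorm A) Q f" and e: "0 < e"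
  shows "\<exists>N. \<forall>n\<ge>N. \<forall>x. norm (poly_op A (Q n) x - cfc A f x) \<le> e * norm x"
proof -
  have A: "bop A" using P by (rule posop_bop)
  have lim: "(\<lambda>n. onorm (\<lambda>v. poly_op A (Q n) v - cfc A f v)) \<longlonglongrightarrow> 0"
    using cfc_spec[OF P cf] Q by (simp add: cfcP_def ulim_def)
  obtain N where N: "\<And>n. n \<ge> N \<Longrightarrow> norm (onorm (\<lambda>v. poly_op A (Q n) v - cfc A f v) - 0) < e"
    using LIMSEQ_D[OF lim e] by blast
  show ?thesis
  proof (intro exI allI impI)
    fix n x assume "N \<le> n"
    have bl: "bop (\<lambda>v. poly_op A (Q n) v - cfc A f v)"
      by (intro bop_minus_op poly_op_bop A cfc_bop P cf)
    have "norm (poly_op A (Q n) x - cfc A f x) \<le> onorm (\<lambda>v. poly_op A (Q n) v - cfc A f v) * norm x"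
      by (rule bop_onorm[OF bl])
    also have "\<dots> \<le> e * norm x"
      using N[OF \<open>N \<le> n\<close>] bop_onorm_nonneg[OF bl] by (intro mult_right_mono) auto
    finally show "norm (poly_op A (Q n) x - cfc A f x) \<le> e * norm x" .
  qed
qed

lemma cfc_tendsto:
  fixes A :: "'a::chilbert_space \<Rightarrow> 'a"
  assumes P: "posop A" and cf: "continuous_on {0..onorm A} f" and Q: "ulim (onorm A) Q f"
  shows "(\<lambda>n. poly_op A (Q n) x) \<longlonglongrightarrow> cfc A f x"
proof -
  have "(\<lambda>n. poly_op A (Q n) x - cfc A f x) \<longlonglongrightarrow> 0"
  proof (rule LIMSEQ_I)
    fix r :: real assume r: "0 < r"
    have r': "0 < r / (norm x + 1)" using r by (simp add: add_nonneg_pos)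
    obtain N where N: "\<And>n. n \<ge> N \<Longrightarrow> norm (poly_op A (Q n) x - cfc A f x) \<le> (r / (norm x + 1)) * norm x"
      using cfc_approx[OF P cf Q r'] by blast
    show "\<exists>no. \<forall>n\<ge>no. norm (poly_op A (Q n) x - cfc A f x - 0) < r"
    proof (intro exI allI impI)
      fix n assume "N \<le> n"
      have "norm (poly_op A (Q n) x - cfc A f x) \<le> (r / (norm x + 1)) * norm x" using N[OF \<open>N \<le> n\<close>] .
      also have "\<dots> < r" using frac_lt_helper[OF r norm_ge_zero] .
      finally show "norm (poly_op A (Q n) x - cfc A f x - 0) < r" by simp
    qed
  qed
  then show ?thesis by (simp add: LIM_zero_iff)
qed


context
  fixes A :: "'a::chilbert_space \<Rightarrow> 'a"
  assumes P: "posop A"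
begin

lemma A_bop: "bop A" using P by (rule posop_bop)
lemma A_sa: "selfadj A" using P by (rule posop_selfadj)

lemma cfc_poly: "cfc A (poly p) = poly_op A p"
proof (rule ext)
  fix x
  have cf: "continuous_on {0..onorm A} (poly p)"
    by (intro continuous_intros)
  have u: "ulim (onorm A) (\<lambda>n. p) (poly p)" by (rule ulimI) auto
  have "(\<lambda>n. poly_op A p x) \<longlonglongrightarrow> cfc A (poly p) x" using cfc_tendsto[OF P cf u] .
  then show "cfc A (poly p) x = poly_op A p x" using LIMSEQ_unique tendsto_const by blast
qed

lemma cfc_cong:
  assumes "\<And>s. s \<in> {0..onorm A} \<Longrightarrow> f s = g s"
  shows "cfc A f = cfc A g"
proof -
  have "\<And>P. uniform_limit {0..onorm A} (\<lambda>n s. poly (P n) s) f sequentially =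
            uniform_limit {0..onorm A} (\<lambda>n s. poly (P n) s) g sequentially"
    using assms by (intro uniform_limit_cong') auto
  then show ?thesis unfolding cfc_def by simp
qed

lemma cfc_id: "cfc A (\<lambda>s. s) = A"
proof -
  have "cfc A (\<lambda>s. s) = cfc A (poly [:0, 1:])" by (rule cfc_cong) simp
  also have "\<dots> = poly_op A [:0, 1:]" by (rule cfc_poly)
  finally show ?thesis by (simp add: fun_eq_iff poly_op_X[OF A_bop])
qed

lemma cfc_one: "cfc A (\<lambda>s. 1) = (\<lambda>x. x)"
proof -
  have "cfc A (\<lambda>s. 1) = cfc A (poly [:1:])" by (rule cfc_cong) simp
  also have "\<dots> = poly_op A [:1:]" by (rule cfc_poly)
  finally show ?thesis by (simp add: fun_eq_iff poly_op_const)
qed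

lemma bounded_on_Icc:
  fixes f :: "real \<Rightarrow> real"
  assumes "continuous_on {0..M} f" shows "\<exists>c. \<forall>s\<in>{0..M}. \<bar>f s\<bar> \<le> c"
proof -
  have "bounded (f ` {0..M})" using compact_continuous_image[OF assms compact_Icc] compact_imp_bounded by blast
  then show ?thesis by (auto simp: bounded_iff)
qed

lemma cfc_norm:
  assumes cf: "continuous_on {0..onorm A} f" and b: "\<And>s. s \<in> {0..onorm A} \<Longrightarrow> \<bar>f s\<bar> \<le> c"
  shows "norm (cfc A f x) \<le> c * norm x"
proof -
  obtain Q where Q: "ulim (onorm A) Q f" using ulim_exists[OF cf] by blast
  have step: "norm (cfc A f x) \<le> (c + e) * norm x" if e: "0 < e" for e
  proof -
    obtain N where N: "\<And>n s. n \<ge> N \<Longrightarrow> s \<in> {0..onorm A} \<Longrightarrow> \<bar>poly (Q n) s - f s\<bar> < e"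
      using ulimD[OF Q e] by blast
    have "(\<lambda>n. norm (poly_op A (Q n) x)) \<longlonglongrightarrow> norm (cfc A f x)"
      by (intro tendsto_intros cfc_tendsto[OF P cf Q])
    then show ?thesis
    proof (rule LIMSEQ_le_const2)
      show "\<exists>N. \<forall>n\<ge>N. norm (poly_op A (Q n) x) \<le> (c + e) * norm x"
      proof (intro exI allI impI)
        fix n assume "N \<le> n"
        show "norm (poly_op A (Q n) x) \<le> (c + e) * norm x"
        proof (rule poly_op_norm_bound[OF P])
          fix s assume s: "s \<in> {0..onorm A}"
          have "\<bar>poly (Q n) s - f s\<bar> < e" using N[OF \<open>N \<le> n\<close> s] .
          moreover have "\<bar>f s\<bar> \<le> c" using b[OF s] .
          ultimately show "\<bar>poly (Q n) s\<bar> \<le> c + e" by linarith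
        qed
      qed
    qed
  qed
  show ?thesis
  proof (rule field_le_epsilon)
    fix e :: real assume e: "0 < e"
    have e': "0 < e / (norm x + 1)" using e by (simp add: add_nonneg_pos)
    have "norm (cfc A f x) \<le> (c + e / (norm x + 1)) * norm x" by (rule step[OF e'])
    also have "\<dots> = c * norm x + e / (norm x + 1) * norm x" by (simp add: algebra_simps)
    also have "e / (norm x + 1) * norm x \<le> e" using frac_lt_helper[OF e norm_ge_zero, of x] by simp
    finally show "norm (cfc A f x) \<le> c * norm x + e" by simp
  qed
qed

lemma cfc_selfadj:
  assumes cf: "continuous_on {0..onorm A} f"
  shows "selfadj (cfc A f)"
  unfolding selfadj_def
proof (intro conjI allI)
  show "bop (cfc A f)" by (rule cfc_bop[OF P cf])
  fix x y
  obtain Q where Q: "ulim (onorm A) Q f" using ulim_exists[OF cf] by blast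
  have "(\<lambda>n. cinner (poly_op A (Q n) x) y) \<longlonglongrightarrow> cinner (cfc A f x) y"
    by (intro tendsto_cinner_left cfc_tendsto[OF P cf Q])
  moreover have "(\<lambda>n. cinner x (poly_op A (Q n) y)) \<longlonglongrightarrow> cinner x (cfc A f y)"
    by (intro tendsto_cinner_right cfc_tendsto[OF P cf Q])
  moreover have "cinner (poly_op A (Q n) x) y = cinner x (poly_op A (Q n) y)" for n
    by (rule selfadj_sym[OF selfadj_poly[OF A_sa]])
  ultimately show "cinner (cfc A f x) y = cinner x (cfc A f y)"
    using LIMSEQ_unique by force
qed

lemma cfc_posop:
  assumes cf: "continuous_on {0..onorm A} f" and nn: "\<And>s. s \<in> {0..onorm A} \<Longrightarrow> 0 \<le> f s"
  shows "posop (cfc A f)"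
  unfolding posop_def
proof (intro conjI allI)
  show "selfadj (cfc A f)" by (rule cfc_selfadj[OF cf])
  fix x
  obtain Q where Q: "ulim (onorm A) Q f" using ulim_exists[OF cf] by blast
  have lim: "(\<lambda>n. Re (cinner (poly_op A (Q n) x) x)) \<longlonglongrightarrow> Re (cinner (cfc A f x) x)"
    by (intro tendsto_Re tendsto_cinner_left cfc_tendsto[OF P cf Q])
  have step: "- e * (norm x)\<^sup>2 \<le> Re (cinner (cfc A f x) x)" if e: "0 < e" for e
  proof (rule LIMSEQ_le_const[OF lim])
    obtain N where N: "\<And>n s. n \<ge> N \<Longrightarrow> s \<in> {0..onorm A} \<Longrightarrow> \<bar>poly (Q n) s - f s\<bar> < e"
      using ulimD[OF Q e] by blast
    show "\<exists>N. \<forall>n\<ge>N. - e * (norm x)\<^sup>2 \<le> Re (cinner (poly_op A (Q n) x) x)"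
    proof (intro exI allI impI)
      fix n assume "N \<le> n"
      have "0 \<le> Re (cinner (poly_op A (Q n + [:e:]) x) x)"
      proof (rule poly_nonneg_op[OF P])
        fix s assume s: "s \<in> {0..onorm A}"
        have "\<bar>poly (Q n) s - f s\<bar> < e" using N[OF \<open>N \<le> n\<close> s] .
        then show "0 \<le> poly (Q n + [:e:]) s" using nn[OF s] by simp
      qed
      also have "Re (cinner (poly_op A (Q n + [:e:]) x) x) = Re (cinner (poly_op A (Q n) x) x) + e * (norm x)\<^sup>2"
        by (simp add: poly_op_add[OF A_bop] poly_op_const cinner_add_left cinner_scaleC_left cinner_self_Re)
      finally show "- e * (norm x)\<^sup>2 \<le> Re (cinner (poly_op A (Q n) x) x)" by simp
    qed
  qed
  show "0 \<le> Re (cinner (cfc A f x) x)"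
  proof (rule field_le_epsilon)
    fix e :: real assume e: "0 < e"
    have e': "0 < e / ((norm x)\<^sup>2 + 1)" using e by (simp add: add_nonneg_pos)
    have "- (e / ((norm x)\<^sup>2 + 1)) * (norm x)\<^sup>2 \<le> Re (cinner (cfc A f x) x)" by (rule step[OF e'])
    moreover have "e / ((norm x)\<^sup>2 + 1) * (norm x)\<^sup>2 \<le> e"
      using frac_lt_helper[OF e, of "(norm x)\<^sup>2"] by simp
    ultimately show "0 \<le> Re (cinner (cfc A f x) x) + e" by simp
  qed
qed

lemma cfc_lin:
  assumes cf: "continuous_on {0..onorm A} f"
  shows "cfc A (\<lambda>s. a * f s + b) x = complex_of_real a *\<^sub>C cfc A f x + complex_of_real b *\<^sub>C x"
proof -
  obtain Q where Q: "ulim (onorm A) Q f" using ulim_exists[OF cf] by blast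
  have cf': "continuous_on {0..onorm A} (\<lambda>s. a * f s + b)" by (intro continuous_intros cf)
  have Q': "ulim (onorm A) (\<lambda>n. smult a (Q n) + [:b:]) (\<lambda>s. a * f s + b)"
  proof (rule ulimI)
    fix e :: real assume e: "0 < e"
    have e': "0 < e / (\<bar>a\<bar> + 1)" using e by (simp add: add_nonneg_pos)
    obtain N where N: "\<And>n s. n \<ge> N \<Longrightarrow> s \<in> {0..onorm A} \<Longrightarrow> \<bar>poly (Q n) s - f s\<bar> < e / (\<bar>a\<bar> + 1)"
      using ulimD[OF Q e'] by blast
    show "\<exists>N. \<forall>n\<ge>N. \<forall>s\<in>{0..onorm A}. \<bar>poly (smult a (Q n) + [:b:]) s - (a * f s + b)\<bar> < e"
    proof (intro exI allI impI ballI)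
      fix n s assume "N \<le> n" "s \<in> {0..onorm A}"
      have "\<bar>poly (smult a (Q n) + [:b:]) s - (a * f s + b)\<bar> = \<bar>a\<bar> * \<bar>poly (Q n) s - f s\<bar>"
        by (simp add: abs_mult[symmetric] algebra_simps)
      also have "\<dots> \<le> \<bar>a\<bar> * (e / (\<bar>a\<bar> + 1))"
        using N[OF \<open>N \<le> n\<close> \<open>s \<in> {0..onorm A}\<close>] by (intro mult_left_mono) auto
      also have "\<dots> < e" using frac_lt_helper[OF e abs_ge_zero, of a] by (simp add: mult.commute)
      finally show "\<bar>poly (smult a (Q n) + [:b:]) s - (a * f s + b)\<bar> < e" .
    qed
  qed
  have l1: "(\<lambda>n. poly_op A (smult a (Q n) + [:b:]) x) \<longlonglongrightarrow> cfc A (\<lambda>s. a * f s + b) x"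
    by (rule cfc_tendsto[OF P cf' Q'])
  have "(\<lambda>n. complex_of_real a *\<^sub>C poly_op A (Q n) x + complex_of_real b *\<^sub>C x)
      \<longlonglongrightarrow> complex_of_real a *\<^sub>C cfc A f x + complex_of_real b *\<^sub>C x"
    by (intro tendsto_add tendsto_const bop_tendsto[OF bop_smult[OF bop_id]] cfc_tendsto[OF P cf Q])
  moreover have "poly_op A (smult a (Q n) + [:b:]) x = complex_of_real a *\<^sub>C poly_op A (Q n) x + complex_of_real b *\<^sub>C x" for n
    by (simp add: poly_op_add[OF A_bop] poly_op_smult[OF A_bop] poly_op_const)
  ultimately show ?thesis using l1 LIMSEQ_unique by fastforce
qed

lemma cfc_mult:
  assumes cf: "continuous_on {0..onorm A} f" and cg: "continuous_on {0..onorm A} g"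
  shows "cfc A (\<lambda>s. f s * g s) x = cfc A f (cfc A g x)"
proof -
  obtain Q where Q: "ulim (onorm A) Q f" using ulim_exists[OF cf] by blast
  obtain R where R: "ulim (onorm A) R g" using ulim_exists[OF cg] by blast
  have cfg: "continuous_on {0..onorm A} (\<lambda>s. f s * g s)" by (intro continuous_intros cf cg)
  have bf: "bounded (f ` {0..onorm A})" "bounded (g ` {0..onorm A})"
    using compact_continuous_image[OF cf compact_Icc] compact_continuous_image[OF cg compact_Icc]
      compact_imp_bounded by blast+
  have QR: "ulim (onorm A) (\<lambda>n. Q n * R n) (\<lambda>s. f s * g s)"
    using uniform_lim_mult[OF Q[unfolded ulim_def] R[unfolded ulim_def] bf]
    by (simp add: ulim_def poly_mult)
  have l1: "(\<lambda>n. poly_op A (Q n * R n) x) \<longlonglongrightarrow> cfc A (\<lambda>s. f s * g s) x"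
    by (rule cfc_tendsto[OF P cfg QR])
  obtain c where c: "\<And>s. s \<in> {0..onorm A} \<Longrightarrow> \<bar>f s\<bar> \<le> c" using bounded_on_Icc[OF cf] by blast
  obtain N where N: "\<And>n s. n \<ge> N \<Longrightarrow> s \<in> {0..onorm A} \<Longrightarrow> \<bar>poly (Q n) s - f s\<bar> < 1"
    using ulimD[OF Q zero_less_one] by blast
  have Qb: "norm (poly_op A (Q n) v) \<le> (c + 1) * norm v" if "n \<ge> N" for n v
  proof (rule poly_op_norm_bound[OF P])
    fix s assume s: "s \<in> {0..onorm A}"
    show "\<bar>poly (Q n) s\<bar> \<le> c + 1" using N[OF that s] c[OF s] by linarith
  qed
  have d1: "(\<lambda>n. poly_op A (Q n) (poly_op A (R n) x - cfc A g x)) \<longlonglongrightarrow> 0"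
  proof (rule Lim_null_comparison)
    show "\<forall>\<^sub>F n in sequentially. norm (poly_op A (Q n) (poly_op A (R n) x - cfc A g x))
        \<le> (c + 1) * norm (poly_op A (R n) x - cfc A g x)"
      unfolding eventually_sequentially using Qb by blast
    have "(\<lambda>n. poly_op A (R n) x - cfc A g x) \<longlonglongrightarrow> 0"
      using cfc_tendsto[OF P cg R] by (simp add: LIM_zero_iff)
    then show "(\<lambda>n. (c + 1) * norm (poly_op A (R n) x - cfc A g x)) \<longlonglongrightarrow> 0"
      using tendsto_mult_right_zero tendsto_norm_zero by blast
  qed
  have d2: "(\<lambda>n. poly_op A (Q n) (cfc A g x)) \<longlonglongrightarrow> cfc A f (cfc A g x)"
    by (rule cfc_tendsto[OF P cf Q])
  have "(\<lambda>n. poly_op A (Q n) (poly_op A (R n) x - cfc A g x) + poly_op A (Q n) (cfc A g x))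
      \<longlonglongrightarrow> 0 + cfc A f (cfc A g x)"
    by (rule tendsto_add[OF d1 d2])
  moreover have "poly_op A (Q n) (poly_op A (R n) x - cfc A g x) + poly_op A (Q n) (cfc A g x)
      = poly_op A (Q n * R n) x" for n
    by (simp add: poly_op_mult[OF A_bop] bop_diff[OF poly_op_bop[OF A_bop]])
  ultimately show ?thesis using l1 LIMSEQ_unique by fastforce
qed

end


lemma rpow_cont: "0 \<le> a \<Longrightarrow> continuous_on {0..M} (rpow a)"
proof -
  assume a: "0 \<le> a"
  show ?thesis
  proof (cases "a = 0")
    case True then show ?thesis by (simp add: rpow_def continuous_on_const)
  next
    case False
    then have "continuous_on {0..M} (\<lambda>s. s powr a)"
      using a by (intro continuous_on_powr' continuous_on_id continuous_on_const) auto
    then show ?thesis using False by (simp add: rpow_def[abs_def])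
  qed
qed

lemma sqrt_cont: "continuous_on {0..M} sqrt"
  by (intro continuous_intros)

lemma rpow_nonneg: "0 \<le> rpow a s" by (simp add: rpow_def)

lemma rpow_add: "0 \<le> a \<Longrightarrow> 0 \<le> b \<Longrightarrow> rpow a s * rpow b s = rpow (a + b) s"
  by (auto simp: rpow_def powr_add)

lemma rpow_one: "0 \<le> s \<Longrightarrow> rpow 1 s = s"
  by (simp add: rpow_def)

lemma rpow_zero_pt: "0 < a \<Longrightarrow> rpow a 0 = 0"
  by (simp add: rpow_def)

lemma tendsto_scaleC_left:
  fixes z :: "'a::complex_normed_vector"
  assumes "c \<longlonglongrightarrow> l" shows "(\<lambda>n. c n *\<^sub>C z) \<longlonglongrightarrow> l *\<^sub>C z"
proof -
  have "(\<lambda>n. cmod (c n - l) * norm z) \<longlonglongrightarrow> 0 * norm z"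
    using assms by (intro tendsto_intros) (simp add: LIM_zero_iff tendsto_norm_zero)
  have "(\<lambda>n. c n *\<^sub>C z - l *\<^sub>C z) \<longlonglongrightarrow> 0"
  proof (rule Lim_null_comparison[OF always_eventually])
    show "\<forall>n. norm (c n *\<^sub>C z - l *\<^sub>C z) \<le> cmod (c n - l) * norm z"
    proof
      fix n
      have "c n *\<^sub>C z - l *\<^sub>C z = (c n - l) *\<^sub>C z" by (rule scaleC_diff_left[symmetric])
      then show "norm (c n *\<^sub>C z - l *\<^sub>C z) \<le> cmod (c n - l) * norm z" by (simp only: norm_scaleC order_refl)
    qed
  qed (use \<open>(\<lambda>n. cmod (c n - l) * norm z) \<longlonglongrightarrow> 0 * norm z\<close> in simp)
  then show ?thesis by (simp add: LIM_zero_iff)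
qed

context
  fixes X :: "'a::chilbert_space \<Rightarrow> 'a"
  assumes P: "posop X"
begin

lemma poly_op_kernel: "X z = 0 \<Longrightarrow> poly_op X p z = complex_of_real (poly p 0) *\<^sub>C z"
proof (induction p)
  case 0 then show ?case by simp
next
  case (pCons a p)
  then show ?case
    by (simp add: poly_op_pCons[OF posop_bop[OF P]] bop_scaleC[OF posop_bop[OF P]])
qed

lemma cfc_kernel:
  assumes cf: "continuous_on {0..onorm X} f" and z: "X z = 0"
  shows "cfc X f z = complex_of_real (f 0) *\<^sub>C z"
proof -
  obtain Q where Q: "ulim (onorm X) Q f" using ulim_exists[OF cf] by blast
  have 0: "0 \<in> {0..onorm X}" using bop_onorm_nonneg[OF posop_bop[OF P]] by simp
  have "(\<lambda>n. poly (Q n) 0) \<longlonglongrightarrow> f 0"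
  proof (rule LIMSEQ_I)
    fix r :: real assume "0 < r"
    then obtain N where "\<And>n s. n \<ge> N \<Longrightarrow> s \<in> {0..onorm X} \<Longrightarrow> \<bar>poly (Q n) s - f s\<bar> < r"
      using ulimD[OF Q] by blast
    then show "\<exists>no. \<forall>n\<ge>no. norm (poly (Q n) 0 - f 0) < r" using 0 by auto
  qed
  then have "(\<lambda>n. complex_of_real (poly (Q n) 0) *\<^sub>C z) \<longlonglongrightarrow> complex_of_real (f 0) *\<^sub>C z"
    by (intro tendsto_scaleC_left tendsto_of_real)
  moreover have "(\<lambda>n. poly_op X (Q n) z) \<longlonglongrightarrow> cfc X f z" by (rule cfc_tendsto[OF P cf Q])
  ultimately show ?thesis using LIMSEQ_unique by (simp add: poly_op_kernel[OF z])
qed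

lemma opow_bop: "0 \<le> a \<Longrightarrow> bop (opow X a)"
  unfolding opow_def by (intro cfc_bop P rpow_cont)

lemma opow_selfadj: "0 \<le> a \<Longrightarrow> selfadj (opow X a)"
  unfolding opow_def by (intro cfc_selfadj P rpow_cont)

lemma opow_mult: "0 \<le> a \<Longrightarrow> 0 \<le> b \<Longrightarrow> opow X a (opow X b x) = opow X (a + b) x"
proof -
  assume a: "0 \<le> a" and b: "0 \<le> b"
  have "opow X a (opow X b x) = cfc X (\<lambda>s. rpow a s * rpow b s) x"
    unfolding opow_def by (rule cfc_mult[OF P rpow_cont[OF a] rpow_cont[OF b], symmetric])
  also have "cfc X (\<lambda>s. rpow a s * rpow b s) = cfc X (rpow (a + b))"
    by (rule cfc_cong[OF P]) (simp add: rpow_add a b)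
  finally show ?thesis by (simp add: opow_def)
qed

lemma opow_one: "opow X 1 = X"
proof -
  have "opow X 1 = cfc X (\<lambda>s. s)" unfolding opow_def by (rule cfc_cong[OF P]) (simp add: rpow_one)
  then show ?thesis by (simp add: cfc_id[OF P])
qed

lemma opow_zero: "opow X 0 = (\<lambda>x. x)"
proof -
  have "opow X 0 = cfc X (\<lambda>s. 1)" unfolding opow_def by (rule cfc_cong[OF P]) (simp add: rpow_def)
  then show ?thesis by (simp add: cfc_one[OF P])
qed

lemma opow_kernel: "0 < a \<Longrightarrow> X z = 0 \<Longrightarrow> opow X a z = 0"
  unfolding opow_def by (simp add: cfc_kernel rpow_cont rpow_zero_pt)

lemma opow_sq_norm: "0 \<le> a \<Longrightarrow> Re (cinner (opow X (2 * a) x) x) = (norm (opow X a x))\<^sup>2"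
proof -
  assume a: "0 \<le> a"
  have "opow X (2 * a) x = opow X a (opow X a x)" using opow_mult[OF a a] by simp
  then have "cinner (opow X (2 * a) x) x = cinner (opow X a x) (opow X a x)"
    by (simp add: selfadj_sym[OF opow_selfadj[OF a]])
  then show ?thesis by (simp add: cinner_self_Re)
qed

end

lemma posop_AT:
  fixes T :: "'a::chilbert_space \<Rightarrow> 'a"
  assumes T: "bop T" shows "posop (adj T \<circ> T)"
  unfolding posop_def selfadj_def
proof (intro conjI allI)
  show "bop (adj T \<circ> T)" by (rule bop_comp'[OF adj_bop[OF T] T])
  fix x y
  show "cinner ((adj T \<circ> T) x) y = cinner x ((adj T \<circ> T) y)"
    by (simp add: adj_prop2[OF T] adj_prop[OF T])
  show "0 \<le> Re (cinner ((adj T \<circ> T) x) x)"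
    by (simp add: adj_prop2[OF T] cinner_commute[of x] cinner_self_Re)
qed

context
  fixes T :: "'a::chilbert_space \<Rightarrow> 'a"
  assumes T: "bop T"
begin

lemma absop_posop: "posop (absop T)"
  unfolding absop_def
  by (intro cfc_posop posop_AT T sqrt_cont) auto

lemma absop_sq: "absop T (absop T x) = adj T (T x)"
proof -
  have PA: "posop (adj T \<circ> T)" by (rule posop_AT[OF T])
  have "absop T (absop T x) = cfc (adj T \<circ> T) (\<lambda>s. sqrt s * sqrt s) x"
    unfolding absop_def by (rule cfc_mult[OF PA sqrt_cont sqrt_cont, symmetric])
  also have "cfc (adj T \<circ> T) (\<lambda>s. sqrt s * sqrt s) = cfc (adj T \<circ> T) (\<lambda>s. s)"
    by (rule cfc_cong[OF PA]) simp
  finally show ?thesis by (simp add: cfc_id[OF PA])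
qed

lemma absop_norm: "norm (absop T x) = norm (T x)"
proof -
  have sa: "selfadj (absop T)" using absop_posop by (rule posop_selfadj)
  have e: "cinner (absop T (absop T x)) x = cinner (absop T x) (absop T x)"
    by (rule selfadj_sym[OF sa])
  have "(norm (absop T x))\<^sup>2 = Re (cinner (absop T (absop T x)) x)"
    by (simp only: e cinner_self_Re)
  also have "\<dots> = (norm (T x))\<^sup>2"
    by (simp add: absop_sq adj_prop2[OF T] cinner_commute[of x] cinner_self_Re)
  finally show ?thesis by (simp add: power2_eq_iff_nonneg)
qed

lemma absop_onorm_le: "onorm (absop T) \<le> onorm T"
  by (rule onorm_bound) (simp_all add: absop_norm bop_onorm[OF T] bop_onorm_nonneg[OF T])

end


section \<open>Transfer of the functional calculus along an intertwining operator\<close>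

lemma poly_op_intertwine:
  assumes X: "bop X" and Y: "bop Y" and U: "bop U" and iw: "\<And>v. Y (U v) = U (X v)"
  shows "poly_op Y q (U v) = U (poly_op X q v)"
proof (induction q arbitrary: v)
  case 0 then show ?case by (simp add: bop_zero[OF U])
next
  case (pCons a q)
  then show ?case
    by (simp add: poly_op_pCons[OF X] poly_op_pCons[OF Y] iw bop_add[OF U] bop_scaleC[OF U])
qed

lemma cfc_transfer:
  fixes X Y U Us :: "'a::chilbert_space \<Rightarrow> 'a"
  assumes PX: "posop X" and PY: "posop Y" and U: "bop U"
    and nrm: "onorm Y \<le> onorm X"
    and iw: "\<And>v. Y (U v) = U (X v)" and Yeq: "\<And>x. Y x = U (X (Us x))"
    and cf: "continuous_on {0..onorm X} f" and f0: "f 0 = 0"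
  shows "cfc Y f x = U (cfc X f (Us x))"
proof -
  have X: "bop X" using PX by (rule posop_bop)
  have Y: "bop Y" using PY by (rule posop_bop)
  have key: "poly_op Y ([:0,1:] * q) x = U (poly_op X ([:0,1:] * q) (Us x))" for q
  proof -
    have "poly_op Y ([:0,1:] * q) x = poly_op Y (q * [:0,1:]) x" by (simp only: mult.commute)
    also have "\<dots> = poly_op Y q (Y x)" by (simp only: poly_op_mult[OF Y] poly_op_X[OF Y])
    also have "\<dots> = U (poly_op X q (X (Us x)))" by (simp add: Yeq poly_op_intertwine[OF X Y U iw])
    also have "\<dots> = U (poly_op X (q * [:0,1:]) (Us x))" by (simp only: poly_op_mult[OF X] poly_op_X[OF X])
    finally show ?thesis by (simp only: mult.commute)
  qed
  obtain Q where Q: "ulim (onorm X) Q f" using ulim_exists[OF cf] by blast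
  define Q' where "Q' n = Q n - [:poly (Q n) 0:]" for n
  define R where "R n = Q' n div [:0,1:]" for n
  have QR: "Q' n = [:0,1:] * R n" for n
  proof -
    have "poly (Q' n) 0 = 0" by (simp add: Q'_def)
    then have "[:0,1:] dvd Q' n" using poly_eq_0_iff_dvd[of "Q' n" 0] by simp
    then show ?thesis unfolding R_def by (rule dvd_mult_div_cancel[symmetric])
  qed
  have 0: "0 \<in> {0..onorm X}" using bop_onorm_nonneg[OF X] by simp
  have Q'u: "ulim (onorm X) Q' f"
  proof (rule ulimI)
    fix e :: real assume e: "0 < e"
    then have e2: "0 < e/2" by simp
    obtain N where N: "\<And>n s. n \<ge> N \<Longrightarrow> s \<in> {0..onorm X} \<Longrightarrow> \<bar>poly (Q n) s - f s\<bar> < e/2"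
      using ulimD[OF Q e2] by blast
    show "\<exists>N. \<forall>n\<ge>N. \<forall>s\<in>{0..onorm X}. \<bar>poly (Q' n) s - f s\<bar> < e"
    proof (intro exI allI impI ballI)
      fix n s assume n: "N \<le> n" and s: "s \<in> {0..onorm X}"
      have "\<bar>poly (Q n) s - f s\<bar> < e/2" "\<bar>poly (Q n) 0 - f 0\<bar> < e/2" using N[OF n s] N[OF n 0] by auto
      moreover have "\<bar>(poly (Q n) s - f s) - (poly (Q n) 0 - f 0)\<bar> \<le> \<bar>poly (Q n) s - f s\<bar> + \<bar>poly (Q n) 0 - f 0\<bar>"
        by (rule abs_triangle_ineq4)
      moreover have "poly (Q' n) s - f s = (poly (Q n) s - f s) - (poly (Q n) 0 - f 0)"
        using f0 by (simp add: Q'_def)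
      ultimately show "\<bar>poly (Q' n) s - f s\<bar> < e" by linarith
    qed
  qed
  have sub: "{0..onorm Y} \<subseteq> {0..onorm X}" using nrm by auto
  have cfY: "continuous_on {0..onorm Y} f" using continuous_on_subset[OF cf sub] .
  have Q'uY: "ulim (onorm Y) Q' f"
    using uniform_limit_on_subset[OF Q'u[unfolded ulim_def] sub] by (simp add: ulim_def)
  have l1: "(\<lambda>n. poly_op Y (Q' n) x) \<longlonglongrightarrow> cfc Y f x" by (rule cfc_tendsto[OF PY cfY Q'uY])
  have l2: "(\<lambda>n. U (poly_op X (Q' n) (Us x))) \<longlonglongrightarrow> U (cfc X f (Us x))"
    by (intro bop_tendsto[OF U] cfc_tendsto[OF PX cf Q'u])
  have "poly_op Y (Q' n) x = U (poly_op X (Q' n) (Us x))" for n by (simp only: QR key)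
  then show ?thesis using l1 l2 LIMSEQ_unique by fastforce
qed

context
  fixes T U :: "'a::chilbert_space \<Rightarrow> 'a"
  assumes T: "bop T" and pd: "polar_decomp T U"
begin

lemma U_bop: "bop U" using pd by (simp add: polar_decomp_def partial_isometry_def)

lemma T_eq: "T x = U (absop T x)"
  using pd by (simp add: polar_decomp_def fun_eq_iff)

lemma kerU: "U z = 0 \<longleftrightarrow> T z = 0"
  using pd by (auto simp: polar_decomp_def set_eq_iff)

lemma kerP: "absop T z = 0 \<longleftrightarrow> T z = 0"
  using absop_norm[OF T, of z] by (metis norm_eq_zero)

lemma pi_iso: "(\<And>z. U z = 0 \<Longrightarrow> cinner z y = 0) \<Longrightarrow> norm (U y) = norm y"
  using pd by (simp add: polar_decomp_def partial_isometry_def)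

lemma pi_UU:
  assumes perp: "\<And>z. U z = 0 \<Longrightarrow> cinner z y = 0"
  shows "adj U (U y) = y"
proof -
  have Ub: "bop U" by (rule U_bop)
  define w where "w = adj U (U y) - y"
  have perpw: "cinner z w = 0" if "U z = 0" for z
    using that perp[OF that] by (simp add: w_def cinner_diff_right adj_prop[OF Ub, symmetric])
  have perps: "cinner z (y + s *\<^sub>C w) = 0" if "U z = 0" for z s
    using perp[OF that] perpw[OF that] by (simp add: cinner_add_right cinner_scaleC_right)
  have eq: "Re (s * cinner (U y) (U w)) = Re (s * cinner y w)" for s
  proof -
    have "(norm (U (y + s *\<^sub>C w)))\<^sup>2 = (norm (y + s *\<^sub>C w))\<^sup>2"
      using pi_iso[OF perps] by simp
    moreover have "norm (U y) = norm y" by (rule pi_iso[OF perp])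
    moreover have "norm (U w) = norm w" by (rule pi_iso[OF perpw])
    ultimately show ?thesis
      by (simp add: bop_add[OF Ub] bop_scaleC[OF Ub] norm_add_sq norm_scaleC cinner_scaleC_right)
  qed
  have "cinner (U y) (U w) = cinner y w"
    using eq[of 1] eq[of "\<i>"] by (simp add: complex_eq_iff)
  then have "cinner (adj U (U y)) w = cinner y w" by (simp add: adj_prop2[OF Ub])
  then have "cinner w w = 0" by (simp add: w_def cinner_diff_left)
  then show ?thesis by (simp add: cinner_self_eq_0 w_def)
qed

lemma perp_P: "U z = 0 \<Longrightarrow> cinner z (absop T v) = 0"
proof -
  assume "U z = 0"
  then have "absop T z = 0" by (simp add: kerU kerP)
  then show ?thesis
    using selfadj_sym[OF posop_selfadj[OF absop_posop[OF T]], of z v] by simp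
qed

lemma UUP: "adj U (U (absop T v)) = absop T v"
  by (rule pi_UU) (rule perp_P)

lemma PUU: "absop T (adj U (U v)) = absop T v"
proof (rule cinner_ext)
  fix y
  have Ub: "bop U" by (rule U_bop)
  have sa: "selfadj (absop T)" by (rule posop_selfadj[OF absop_posop[OF T]])
  have "cinner (absop T (adj U (U v))) y = cinner (adj U (U v)) (absop T y)" by (rule selfadj_sym[OF sa])
  also have "\<dots> = cinner (U v) (U (absop T y))" by (rule adj_prop2[OF Ub])
  also have "\<dots> = cinner v (adj U (U (absop T y)))" by (rule adj_prop[OF Ub])
  also have "\<dots> = cinner v (absop T y)" by (simp add: UUP)
  also have "\<dots> = cinner (absop T v) y" by (rule selfadj_sym[OF sa, symmetric])
  finally show "cinner (absop T (adj U (U v))) y = cinner (absop T v) y" .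
qed

lemma adjT: "adj T x = absop T (adj U x)"
proof -
  have Ub: "bop U" by (rule U_bop)
  have sa: "selfadj (absop T)" by (rule posop_selfadj[OF absop_posop[OF T]])
  have "adj T = (\<lambda>x. absop T (adj U x))"
  proof (rule adj_unique[OF T])
    fix x y
    show "cinner (T x) y = cinner x (absop T (adj U y))"
      by (simp add: T_eq adj_prop[OF Ub] selfadj_sym[OF sa])
  qed
  then show ?thesis by simp
qed

lemma Us_norm: "norm (adj U x) \<le> norm x"
proof -
  have Ub: "bop U" by (rule U_bop)
  have perp: "cinner z (adj U x) = 0" if "U z = 0" for z
    using that by (simp add: adj_prop[OF Ub, symmetric])
  have iso: "norm (U (adj U x)) = norm (adj U x)" by (rule pi_iso[OF perp])
  have "(norm (adj U x))\<^sup>2 = Re (cinner (U (adj U x)) x)"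
    by (simp add: adj_prop[OF Ub] cinner_self_Re)
  also have "\<dots> \<le> cmod (cinner (U (adj U x)) x)" by (rule complex_Re_le_cmod)
  also have "\<dots> \<le> norm (adj U x) * norm x" using Cauchy_Schwarz_c[of "U (adj U x)" x] iso by simp
  finally have "norm (adj U x) * norm (adj U x) \<le> norm (adj U x) * norm x" by (simp add: power2_eq_square)
  then show ?thesis by (cases "adj U x = 0") auto
qed

lemma absop_adj: "absop (adj T) x = U (absop T (adj U x))"
proof -
  have Ub: "bop U" by (rule U_bop)
  have aT: "bop (adj T)" by (rule adj_bop[OF T])
  define A where "A = adj T \<circ> T"
  define A' where "A' = adj (adj T) \<circ> adj T"
  have PA: "posop A" unfolding A_def by (rule posop_AT[OF T])
  have PA': "posop A'" unfolding A'_def by (rule posop_AT[OF aT])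
  have Aeq: "A v = absop T (absop T v)" for v by (simp add: A_def absop_sq[OF T])
  have A'eq: "A' x = U (A (adj U x))" for x
    by (simp add: A'_def adj_adj[OF T] T_eq adjT Aeq)
  have iw: "A' (U v) = U (A v)" for v by (simp add: A'eq Aeq PUU)
  have nrm: "onorm A' \<le> onorm A"
  proof (rule onorm_bound)
    show "0 \<le> onorm A" by (rule bop_onorm_nonneg[OF posop_bop[OF PA]])
    fix x
    have "norm (A' x) = norm (A (adj U x))"
      unfolding A'eq Aeq by (rule pi_iso) (rule perp_P)
    also have "\<dots> \<le> onorm A * norm (adj U x)" by (rule bop_onorm[OF posop_bop[OF PA]])
    also have "\<dots> \<le> onorm A * norm x"
      by (intro mult_left_mono Us_norm bop_onorm_nonneg[OF posop_bop[OF PA]])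
    finally show "norm (A' x) \<le> onorm A * norm x" .
  qed
  have "cfc A' sqrt x = U (cfc A sqrt (adj U x))"
    by (rule cfc_transfer[where X=A and Y=A' and U=U and Us="adj U" and f=sqrt,
          OF PA PA' Ub nrm iw A'eq sqrt_cont real_sqrt_zero])
  then show ?thesis unfolding absop_def A_def A'_def .
qed

lemma opow_adj:
  assumes a: "0 < a"
  shows "opow (absop (adj T)) a x = U (opow (absop T) a (adj U x))"
proof -
  have Ub: "bop U" by (rule U_bop)
  have PP: "posop (absop T)" by (rule absop_posop[OF T])
  have PP': "posop (absop (adj T))" by (rule absop_posop[OF adj_bop[OF T]])
  have iw: "absop (adj T) (U v) = U (absop T v)" for v by (simp add: absop_adj PUU)
  have nrm: "onorm (absop (adj T)) \<le> onorm (absop T)"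
  proof (rule onorm_bound)
    show "0 \<le> onorm (absop T)" by (rule bop_onorm_nonneg[OF posop_bop[OF PP]])
    fix x
    have "norm (absop (adj T) x) = norm (absop T (adj U x))"
      unfolding absop_adj by (rule pi_iso) (rule perp_P)
    also have "\<dots> \<le> onorm (absop T) * norm (adj U x)" by (rule bop_onorm[OF posop_bop[OF PP]])
    also have "\<dots> \<le> onorm (absop T) * norm x"
      by (intro mult_left_mono Us_norm bop_onorm_nonneg[OF posop_bop[OF PP]])
    finally show "norm (absop (adj T) x) \<le> onorm (absop T) * norm x" .
  qed
  show ?thesis unfolding opow_def
    by (rule cfc_transfer[where X="absop T" and Y="absop (adj T)" and U=U and Us="adj U" and f="rpow a",
          OF PP PP' Ub nrm iw absop_adj rpow_cont]) (use a in \<open>auto simp: rpow_zero_pt\<close>)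
qed

lemma opow_adj_norm:
  assumes a: "0 < a"
  shows "norm (opow (absop (adj T)) a x) = norm (opow (absop T) a (adj U x))"
proof -
  have PP: "posop (absop T)" by (rule absop_posop[OF T])
  have perp: "cinner z (opow (absop T) a v) = 0" if "U z = 0" for z v
  proof -
    have "absop T z = 0" using that by (simp add: kerU kerP)
    then have "opow (absop T) a z = 0" by (rule opow_kernel[OF PP a])
    then show ?thesis
      using selfadj_sym[OF opow_selfadj[OF PP], of a z v] a by simp
  qed
  show ?thesis unfolding opow_adj[OF a] by (rule pi_iso) (rule perp)
qed

end


lemma real_key:
  fixes al be bs ga :: real
  assumes nn: "0 \<le> al" "0 \<le> be" "0 \<le> bs" "0 \<le> ga"
    and cs: "ga \<le> al * be"
    and rel: "be = bs \<or> (al = 1 \<and> bs = 1 \<and> be \<le> 1)"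
  shows "al * be + ga \<le> al\<^sup>2 + bs\<^sup>2 - bs / (2 * al) * (if be = 0 then al\<^sup>2 else al\<^sup>2 - ga\<^sup>2 / be\<^sup>2)"
proof (cases "al = 0")
  case True
  then have "ga = 0" using cs nn by simp
  then show ?thesis using True by simp
next
  case al0: False
  then have alp: "0 < al" using nn by simp
  show ?thesis
  proof (cases "be = 0")
    case True
    then have ga0: "ga = 0" using cs nn by simp
    have eq: "bs / (2 * al) * al\<^sup>2 = bs * al / 2" using alp by (simp add: power2_eq_square field_simps)
    have e1: "(if be = 0 then al\<^sup>2 else al\<^sup>2 - ga\<^sup>2 / be\<^sup>2) = al\<^sup>2" using True by simp
    have "0 \<le> al\<^sup>2 + bs\<^sup>2 - bs * al / 2"
    proof -
      have "0 \<le> (al - bs / 4)\<^sup>2 + 15 / 16 * bs\<^sup>2" by simp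
      also have "\<dots> = al\<^sup>2 + bs\<^sup>2 - bs * al / 2" by (simp add: power2_eq_square field_simps)
      finally show ?thesis .
    qed
    then show ?thesis unfolding e1 eq using True ga0 by simp
  next
    case be0: False
    then have bep: "0 < be" using nn by simp
    have rhs: "al\<^sup>2 + bs\<^sup>2 - bs / (2 * al) * (if be = 0 then al\<^sup>2 else al\<^sup>2 - ga\<^sup>2 / be\<^sup>2)
        = al\<^sup>2 + bs\<^sup>2 - bs * al / 2 + bs * ga\<^sup>2 / (2 * al * be\<^sup>2)"
      using alp bep be0 by (simp add: power2_eq_square field_simps)
    show ?thesis
      using rel
    proof
      assume eq: "be = bs"
      have "2 * al * be * (al * be + ga) \<le> 2 * al * be * (al\<^sup>2 + be\<^sup>2 - be * al / 2 + be * ga\<^sup>2 / (2 * al * be\<^sup>2))"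
      proof -
        have "2 * al * be * (al\<^sup>2 + be\<^sup>2 - be * al / 2 + be * ga\<^sup>2 / (2 * al * be\<^sup>2))
            = 2 * al * be * (al\<^sup>2 + be\<^sup>2) - al\<^sup>2 * be\<^sup>2 + ga\<^sup>2"
          using alp bep by (simp add: power2_eq_square field_simps)
        moreover have "2 * al * be * (al * be + ga) + (2 * al * be * (al - be)\<^sup>2 + (al * be - ga)\<^sup>2)
            = 2 * al * be * (al\<^sup>2 + be\<^sup>2) - al\<^sup>2 * be\<^sup>2 + ga\<^sup>2"
          by (simp add: power2_eq_square algebra_simps)
        moreover have "0 \<le> 2 * al * be * (al - be)\<^sup>2 + (al * be - ga)\<^sup>2"
          using alp bep by (intro add_nonneg_nonneg mult_nonneg_nonneg) auto
        ultimately show ?thesis by linarith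
      qed
      then have "al * be + ga \<le> al\<^sup>2 + be\<^sup>2 - be * al / 2 + be * ga\<^sup>2 / (2 * al * be\<^sup>2)"
        using alp bep by (simp add: mult_le_cancel_left_pos)
      then show ?thesis using rhs eq by simp
    next
      assume h: "al = 1 \<and> bs = 1 \<and> be \<le> 1"
      define g where "g = ga / be"
      have g1: "g \<le> 1" using cs h bep by (simp add: g_def)
      have g0: "0 \<le> g" using nn bep by (simp add: g_def)
      have "al * be + ga = be * (1 + g)" using h bep by (simp add: g_def field_simps)
      also have "\<dots> \<le> 1 * (1 + g)" using h g0 by (intro mult_right_mono) auto
      also have "\<dots> \<le> 3/2 + g\<^sup>2 / 2"
      proof -
        have "0 \<le> (1 - g)\<^sup>2 / 2" by simp
        then show ?thesis by (simp add: power2_eq_square field_simps)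
      qed
      also have "3/2 + g\<^sup>2 / 2 = al\<^sup>2 + bs\<^sup>2 - bs * al / 2 + bs * ga\<^sup>2 / (2 * al * be\<^sup>2)"
        using h bep by (simp add: g_def power2_eq_square field_simps)
      finally show ?thesis using rhs by simp
    qed
  qed
qed


lemma proj_norm:
  fixes a b :: "'a::complex_inner"
  assumes b: "b \<noteq> 0"
  shows "(norm (a - (cinner b a / complex_of_real ((norm b)\<^sup>2)) *\<^sub>C b))\<^sup>2
       = (norm a)\<^sup>2 - (cmod (cinner a b))\<^sup>2 / (norm b)\<^sup>2"
proof -
  define w where "w = cinner a b"
  define c where "c = cinner b a / complex_of_real ((norm b)\<^sup>2)"
  have nb: "0 < norm b" using b by simp
  have cw: "cinner b a = cnj w" by (simp add: w_def cinner_commute[of b a])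
  have "(norm (a - c *\<^sub>C b))\<^sup>2 = (norm a)\<^sup>2 + (cmod c * norm b)\<^sup>2 - 2 * Re (c * w)"
    by (simp add: norm_diff_sq norm_scaleC cinner_scaleC_right w_def)
  also have "c * w = of_real ((cmod w)\<^sup>2 / (norm b)\<^sup>2)"
  proof -
    have "cnj w * w = of_real ((cmod w)\<^sup>2)" by (simp only: complex_norm_square mult.commute)
    then show ?thesis by (simp add: c_def cw)
  qed
  also have "cmod c = cmod w / (norm b)\<^sup>2"
    by (simp add: c_def cw norm_divide norm_power)
  finally have h: "(norm (a - c *\<^sub>C b))\<^sup>2 = (norm a)\<^sup>2 + (cmod w / (norm b)\<^sup>2 * norm b)\<^sup>2
      - 2 * Re (complex_of_real ((cmod w)\<^sup>2 / (norm b)\<^sup>2))" .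
  have h2: "(cmod w / (norm b)\<^sup>2 * norm b)\<^sup>2 = (cmod w)\<^sup>2 / (norm b)\<^sup>2"
    using nb by (simp add: power2_eq_square field_simps)
  have "(norm (a - c *\<^sub>C b))\<^sup>2 = (norm a)\<^sup>2 - (cmod w)\<^sup>2 / (norm b)\<^sup>2"
    unfolding h h2 Re_complex_of_real by simp
  then show ?thesis by (simp add: c_def w_def)
qed

lemma INF_bound:
  fixes a b :: "'a::complex_inner"
  shows "(INF c::complex. (norm (a - c *\<^sub>C b))\<^sup>2) \<le>
     (if norm b = 0 then (norm a)\<^sup>2 else (norm a)\<^sup>2 - (cmod (cinner a b))\<^sup>2 / (norm b)\<^sup>2)"
proof -
  have bdd: "bdd_below (range (\<lambda>c::complex. (norm (a - c *\<^sub>C b))\<^sup>2))"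
    by (rule bdd_belowI[of _ 0]) auto
  show ?thesis
  proof (cases "b = 0")
    case True
    have "(INF c::complex. (norm (a - c *\<^sub>C b))\<^sup>2) \<le> (norm (a - 0 *\<^sub>C b))\<^sup>2"
      by (rule cINF_lower[OF bdd]) simp
    then show ?thesis using True by simp
  next
    case False
    have "(INF c::complex. (norm (a - c *\<^sub>C b))\<^sup>2)
        \<le> (norm (a - (cinner b a / complex_of_real ((norm b)\<^sup>2)) *\<^sub>C b))\<^sup>2"
      by (rule cINF_lower[OF bdd]) simp
    also have "\<dots> = (norm a)\<^sup>2 - (cmod (cinner a b))\<^sup>2 / (norm b)\<^sup>2" by (rule proj_norm[OF False])
    finally show ?thesis using False by simp
  qed
qed

lemma INF_nonneg:
  fixes a b :: "'a::complex_inner"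
  shows "0 \<le> (INF c::complex. (norm (a - c *\<^sub>C b))\<^sup>2)"
  by (rule cINF_greatest) auto

context
  fixes T U :: "'a::chilbert_space \<Rightarrow> 'a" and t :: real
  assumes T: "bop T" and Tn0: "T \<noteq> (\<lambda>v. 0)" and pd: "polar_decomp T U"
    and t: "t \<in> {0..1}"
begin

lemma pointwise:
  assumes x1: "norm x = 1"
  shows "cmod (cinner (T x) x) \<le> onorm T powr (1 - t) / 2 *
           (onorm (\<lambda>v. opow (absop T) t v + opow (absop (adj T)) t v)
            - norm (opow (absop (adj T)) (t/2) x) / (2 * norm (opow (absop T) (t/2) x))
              * (INF c::complex. (norm (opow (absop T) (t/2) x
                 - c *\<^sub>C opow (absop T) (t/2) (adj U x)))\<^sup>2))"
proof -
  define P where "P = absop T"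
  define P' where "P' = absop (adj T)"
  define K where "K = onorm T powr (1 - t)"
  define S where "S = (\<lambda>v. opow P t v + opow P' t v)"
  define a where "a = opow P (t/2) x"
  define b where "b = opow P (t/2) (adj U x)"
  define bs where "bs = opow P' (t/2) x"
  define R where "R = opow P (1 - t)"
  have t0: "0 \<le> t" and t1: "t \<le> 1" using t by auto
  have PP: "posop P" unfolding P_def by (rule absop_posop[OF T])
  have PP': "posop P'" unfolding P'_def by (rule absop_posop[OF adj_bop[OF T]])
  have Ub: "bop U" by (rule U_bop[OF T pd])
  have nT: "0 < onorm T"
  proof -
    have "\<not> (\<forall>x. T x = 0)" using Tn0 by auto
    then show ?thesis using onorm_pos_lt[OF bop_bl[OF T]] by simp
  qed
  have K0: "0 \<le> K" by (simp add: K_def)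
  have i: "cinner (T x) x = cinner (R a) b"
  proof -
    have "P x = opow P (t/2) (R (opow P (t/2) x))"
    proof -
      have "opow P (t/2) (R (opow P (t/2) x)) = opow P (t/2 + ((1 - t) + t/2)) x"
        unfolding R_def using t0 t1 by (simp add: opow_mult[OF PP])
      also have "t/2 + ((1 - t) + t/2) = 1" by simp
      finally show ?thesis by (simp add: opow_one[OF PP])
    qed
    then have "cinner (T x) x = cinner (opow P (t/2) (R a)) (adj U x)"
      by (simp add: T_eq[OF T pd] adj_prop[OF Ub] P_def a_def)
    also have "\<dots> = cinner (R a) b"
      unfolding b_def using t0 by (simp add: selfadj_sym[OF opow_selfadj[OF PP]])
    finally show ?thesis .
  qed
  define W where "W = cfc P (\<lambda>s. 2 * rpow (1 - t) s + (- K)) a"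
  have Weq: "W = complex_of_real 2 *\<^sub>C R a + complex_of_real (- K) *\<^sub>C a"
    unfolding W_def R_def opow_def using t1 by (intro cfc_lin[OF PP rpow_cont]) simp
  have Wb: "norm W \<le> K * norm a"
    unfolding W_def
  proof (rule cfc_norm[OF PP])
    show "continuous_on {0..onorm P} (\<lambda>s. 2 * rpow (1 - t) s + - K)"
      using t1 by (intro continuous_intros rpow_cont) simp
    fix s assume s: "s \<in> {0..onorm P}"
    have sT: "s \<le> onorm T" using s absop_onorm_le[OF T] by (simp add: P_def)
    have "rpow (1 - t) s \<le> K"
    proof (cases "t = 1")
      case True then show ?thesis using nT by (simp add: rpow_def K_def)
    next
      case False
      then have "1 - t \<noteq> 0" by simp
      then show ?thesis using s sT t1 by (simp add: rpow_def K_def powr_mono2)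
    qed
    moreover have "0 \<le> rpow (1 - t) s" by (rule rpow_nonneg)
    ultimately show "\<bar>2 * rpow (1 - t) s + - K\<bar> \<le> K" by linarith
  qed
  have iii: "cmod (cinner (R a) b) \<le> K / 2 * (norm a * norm b + cmod (cinner a b))"
  proof -
    have "cinner W b = 2 * cinner (R a) b - of_real K * cinner a b"
      by (simp add: Weq cinner_add_left cinner_scaleC_left)
    then have eqR: "cinner (R a) b = (cinner W b + of_real K * cinner a b) / 2" by simp
    have "cmod (cinner (R a) b) = cmod (cinner W b + of_real K * cinner a b) / 2"
      unfolding eqR by (simp add: norm_divide)
    also have "\<dots> \<le> (cmod (cinner W b) + K * cmod (cinner a b)) / 2"
      using K0 by (intro divide_right_mono) (auto intro: order_trans[OF norm_triangle_ineq] simp: norm_mult)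
    also have "cmod (cinner W b) \<le> K * norm a * norm b"
      using Cauchy_Schwarz_c[of W b] Wb by (meson mult_right_mono norm_ge_zero order_trans)
    then have "(cmod (cinner W b) + K * cmod (cinner a b)) / 2 \<le> (K * norm a * norm b + K * cmod (cinner a b)) / 2"
      by simp
    finally show ?thesis by (simp add: algebra_simps)
  qed
  have Sb: "bop S" unfolding S_def using t0 by (intro bop_plus opow_bop PP PP')
  have iv: "(norm a)\<^sup>2 + (norm bs)\<^sup>2 \<le> onorm S"
  proof -
    have eq: "Re (cinner (S x) x) = (norm a)\<^sup>2 + (norm bs)\<^sup>2"
      using opow_sq_norm[OF PP, of "t/2" x] opow_sq_norm[OF PP', of "t/2" x] t0
      by (simp add: S_def a_def bs_def cinner_add_left)
    have "Re (cinner (S x) x) \<le> cmod (cinner (S x) x)" by (rule complex_Re_le_cmod)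
    also have "\<dots> \<le> norm (S x) * norm x" by (rule Cauchy_Schwarz_c)
    also have "\<dots> \<le> onorm S" using bop_onorm[OF Sb, of x] x1 by simp
    finally show ?thesis using eq by simp
  qed
  have v: "norm b = norm bs \<or> (norm a = 1 \<and> norm bs = 1 \<and> norm b \<le> 1)"
  proof (cases "t = 0")
    case True
    then have "norm a = 1" "norm bs = 1" "norm b \<le> 1"
      using x1 Us_norm[OF T pd, of x] by (simp_all add: a_def bs_def b_def opow_zero[OF PP] opow_zero[OF PP'])
    then show ?thesis by simp
  next
    case False
    then have "0 < t/2" using t0 by simp
    then show ?thesis
      using opow_adj_norm[OF T pd, of "t/2" x] by (simp add: b_def bs_def P_def P'_def)
  qed
  define trm where "trm = norm bs / (2 * norm a) * (INF c::complex. (norm (a - c *\<^sub>C b))\<^sup>2)"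
  have vi: "trm \<le> norm bs / (2 * norm a) *
      (if norm b = 0 then (norm a)\<^sup>2 else (norm a)\<^sup>2 - (cmod (cinner a b))\<^sup>2 / (norm b)\<^sup>2)"
    unfolding trm_def by (intro mult_left_mono INF_bound) auto
  have rk: "norm a * norm b + cmod (cinner a b) \<le> (norm a)\<^sup>2 + (norm bs)\<^sup>2 - norm bs / (2 * norm a) *
      (if norm b = 0 then (norm a)\<^sup>2 else (norm a)\<^sup>2 - (cmod (cinner a b))\<^sup>2 / (norm b)\<^sup>2)"
    by (rule real_key) (use v Cauchy_Schwarz_c[of a b] in auto)
  have "cmod (cinner (T x) x) \<le> K / 2 * (norm a * norm b + cmod (cinner a b))" using i iii by simp
  also have "\<dots> \<le> K / 2 * (onorm S - trm)"
    using rk vi iv K0 by (intro mult_left_mono) auto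
  finally show ?thesis by (simp add: K_def S_def trm_def a_def b_def bs_def P_def P'_def)
qed

end

theorem theorem2p12:
  fixes T U :: "'a::chilbert_space \<Rightarrow> 'a" and x :: "nat \<Rightarrow> 'a" and t L :: real
  assumes "bop T" and "T \<noteq> (\<lambda>v. 0)"
    and "polar_decomp T U"
    and "\<And>n. norm (x n) = 1"
    and "(\<lambda>n. cmod (cinner (T (x n)) (x n))) \<longlonglongrightarrow> numrad T"
    and "t \<in> {0..1}"
    and "(\<lambda>n. norm (opow (absop (adj T)) (t/2) (x n)) / (2 * norm (opow (absop T) (t/2) (x n)))
            * (INF c::complex. (norm (opow (absop T) (t/2) (x n)
                 - c *\<^sub>C opow (absop T) (t/2) (adj U (x n))))\<^sup>2)) \<longlonglongrightarrow> L"
  shows "numrad T \<le> onorm T powr (1 - t) / 2 *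
           (onorm (\<lambda>v. opow (absop T) t v + opow (absop (adj T)) t v) - L)
       \<and> onorm T powr (1 - t) / 2 *
           (onorm (\<lambda>v. opow (absop T) t v + opow (absop (adj T)) t v) - L)
         \<le> onorm T powr (1 - t) / 2 * onorm (\<lambda>v. opow (absop T) t v + opow (absop (adj T)) t v)"
proof -
  have t0: "0 \<le> t" using assms(6) by simp
  define S where "S = onorm (\<lambda>v. opow (absop T) t v + opow (absop (adj T)) t v)"
  define K where "K = onorm T powr (1 - t)"
  define trm where "trm n = norm (opow (absop (adj T)) (t/2) (x n)) / (2 * norm (opow (absop T) (t/2) (x n)))
            * (INF c::complex. (norm (opow (absop T) (t/2) (x n)
                 - c *\<^sub>C opow (absop T) (t/2) (adj U (x n))))\<^sup>2)" for n
  have K0: "0 \<le> K" by (simp add: K_def)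
  have pw: "cmod (cinner (T (x n)) (x n)) \<le> K / 2 * (S - trm n)" for n
    using pointwise[OF assms(1) assms(2) assms(3) assms(6) assms(4)[of n]]
    by (simp add: S_def K_def trm_def)
  have trmL: "trm \<longlonglongrightarrow> L" using assms(7) by (simp add: trm_def[abs_def])
  have lim: "(\<lambda>n. K / 2 * (S - trm n)) \<longlonglongrightarrow> K / 2 * (S - L)"
    by (intro tendsto_intros trmL)
  have 1: "numrad T \<le> K / 2 * (S - L)"
    by (rule LIMSEQ_le[OF assms(5) lim]) (use pw in auto)
  have trm0: "0 \<le> trm n" for n
    unfolding trm_def by (intro mult_nonneg_nonneg divide_nonneg_nonneg INF_nonneg) auto
  have L0: "0 \<le> L" by (rule LIMSEQ_le_const[OF trmL]) (use trm0 in auto)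
  have 2: "K / 2 * (S - L) \<le> K / 2 * S"
    using K0 L0 by (intro mult_left_mono) auto
  show ?thesis using 1 2 by (simp add: S_def K_def)
qed


end
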